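(* Under the setting below, for each unit $i$ the output $\tilde{\mathbf Z}^{obs}_i$ of the knockoff construction algorithm (run with the true model parameters) is a knockoff copy of $\mathbf Z^{obs}_i$ in the sense of the knockoff definition below.
   Context: Setting. There are $N$ independent and identically distributed units $i=1,\dots,N$. For unit $i$: $\mathcal B_i$ is a set of item indices and $\mathbf Y_i=\{Y_{ij}:j\in\mathcal B_i\}$ are item responses; $\mathbf Z_i=(Z_{i1},\dots,Z_{ip})^\top$ is the complete predictor vector, each predictor $j$ being continuous (real-valued), binary (values $\{0,1\}$, set $K_j=1$) or ordinal (values $\{0,\dots,K_j\}$, $K_j\ge2$); $\mathcal D\subset\{1,\dots,p\}$ is the set of binary and ordinal predictors; $\mathcal A_i\subset\{1,\dots,p\}$ is the random set of observed predictors and $\mathbf Z^{obs}_i=\{Z_{ij}:j\in\mathcal A_i\}$. Gaussian copula model: $\mathbf Z_i^*\sim N(\mathbf 0,\Sigma)$ with $\Sigma$ a $p\times p$ correlation matrix (unit diagonal) of rank $p$, and $Z_{ij}=F_j(Z^*_{ij})$, where for continuous $j$, $F_j(z)=c_j+d_jz$ with $d_j>0$, and for $j\in\mathcal D$, $F_j(z)=k$ iff $z\in(c_{jk},c_{j,k+1}]$, $k=0,\dots,K_j$, with $c_{j0}=-\infty<c_{j1}<\dots<c_{jK_j}<c_{j,K_j+1}=+\infty$. Latent regression model: a latent $\theta_i$ with $\theta_i\mid\mathbf Z_i\sim N(\beta_0+\sum_{j=1}^p\boldsymbol\beta_j^\top g_j(Z_{ij}),\sigma^2)$, where $g_j(z)=z$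 for continuous or binary $j$ and $g_j(z)=(\mathbb I(z\ge1),\dots,\mathbb I(z\ge K_j))^\top$ for ordinal $j$; given $\theta_i$, the $Y_{ij}$, $j\in\mathcal B_i$, are mutually independent and independent of $\mathbf Z_i$, with known pmfs $P(Y_{ij}=y\mid\theta_i)=h_j(y\mid\theta_i)$. The non-null set is $\mathcal S^*=\{j:\|\boldsymbol\beta_j\|\ne0\}$. Missingness: $\mathcal A_i$ and $\mathbf Y_i$ are conditionally independent given $\mathbf Z_i$, and the SMAR condition holds: with $q(\alpha\mid\mathbf z)$ the conditional pmf of $\mathcal A_i$ given $\mathbf Z_i=\mathbf z$, $q(\alpha\mid\mathbf z)=q(\alpha\mid\mathbf z')$ whenever $z_k=z'_k$ for all $k\in\alpha\cap\mathcal S^*$. Knockoff definition: $\tilde{\mathbf Z}^{obs}_i$ is a knockoff copy of $\mathbf Z^{obs}_i$ if there exist complete vectors $\mathbf Z_i$ and $\tilde{\mathbf Z}_i=(\tilde Z_{i1},\dots,\tilde Z_{ip})^\top$ such that (1) $\mathbf Z^{obs}_i=\{Z_{ij}:j\in\mathcal A_i\}$ and $\tilde{\mathbf Z}^{obs}_i=\{\tilde Z_{ij}:j\in\mathcal A_i\}$; (2) $\tilde{\mathbf Z}_i$, $\mathbf Y_i$ and $\mathcal A_i$ are conditionally independent given $\mathbf Z_i$; (3) $\mathbf Z_i$ follows the Gaussian copula model and $\mathbf Y_i\mid\mathbf Z_i$ follows the latent regression model; (4) for every $\mathcal S\subset\{1,\dots,p\}$, $(\mathbf Z_i,\tilde{\mathbf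 Z}_i)_{\mathrm{swap}(\mathcal S)}$ and $(\mathbf Z_i,\tilde{\mathbf Z}_i)$ have the same distribution, where $\mathrm{swap}(\mathcal S)$ exchanges $Z_{ij}$ and $\tilde Z_{ij}$ for each $j\in\mathcal S$. Knockoff construction algorithm (given the true parameters $\Xi$ of the copula model and $\beta_0,\boldsymbol\beta,\sigma^2$): Step 1, sample $\mathbf Z_i^*$ from its conditional distribution given $\mathbf Z^{obs}_i$ and $\mathbf Y_i$ under the joint model; Step 2, sample $\tilde{\mathbf Z}_i^*$ given $\mathbf Z_i^*$ so that $(\mathbf Z_i^*,\tilde{\mathbf Z}_i^* )\sim N\!\left(\mathbf 0,G\right)$ with $G=\begin{pmatrix}\Sigma&\Sigma-S\\ \Sigma-S&\Sigma\end{pmatrix}$, $S$ a diagonal matrix such that $G$ is positive semidefinite; Step 3, set $\tilde Z_{ij}=F_j(\tilde Z^*_{ij})$, $j=1,\dots,p$; output $\tilde{\mathbf Z}^{obs}_i=\{\tilde Z_{ij}:j\in\mathcal A_i\}$. *)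

theory Defs
  imports "HOL-Probability.Probability"
begin

(* Type of a predictor: continuous, or discrete (binary = K_j = 1, ordinal = K_j >= 2) *)
datatype vtype = Cont | Disc

record 'p copula =
  ty  :: "'p \<Rightarrow> vtype"
  Kn  :: "'p \<Rightarrow> nat"
  cc  :: "'p \<Rightarrow> real"
  dd  :: "'p \<Rightarrow> real"
  thr :: "'p \<Rightarrow> nat \<Rightarrow> real"    (* c_{jk}, k = 1..K_j (discrete) *)
  Sig :: "real^'p^'p"

(* Parameters of the latent regression model; items indexed by the finite type 'q = B_i *)
record ('p,'q) latreg =
  b0  :: real
  bet :: "'p \<Rightarrow> nat \<Rightarrow> real"    (* beta_j: components k = 1..K_j (discrete), component 1 (continuous) *)
  s2  :: real
  hh  :: "'q \<Rightarrow> real \<Rightarrow> nat \<Rightarrow> real" (* h_j(y | theta), responses coded in nat *)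

definition valid_copula :: "'p::finite copula \<Rightarrow> bool" where
  "valid_copula P \<longleftrightarrow>
     (\<forall>j. ty P j = Cont \<longrightarrow> dd P j > 0) \<and>
     (\<forall>j. ty P j = Disc \<longrightarrow> Kn P j \<ge> 1 \<and>
            (\<forall>k. 1 \<le> k \<and> k < Kn P j \<longrightarrow> thr P j k < thr P j (Suc k))) \<and>
     (\<forall>j. Sig P $ j $ j = 1) \<and> transpose (Sig P) = Sig P \<and>
     (\<forall>x. 0 \<le> x \<bullet> (Sig P *v x)) \<and> invertible (Sig P)"

(* F_j ; for discrete j, F_j(z) = k iff z in (c_{jk}, c_{j,k+1}] *)
definition Fj :: "'p::finite copula \<Rightarrow> 'p \<Rightarrow> real \<Rightarrow> real" where
  "Fj P j x = (case ty P j of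
      Cont \<Rightarrow> cc P j + dd P j * x
    | Disc \<Rightarrow> real (card {k \<in> {1..Kn P j}. thr P j k < x}))"

definition Fmap :: "'p::finite copula \<Rightarrow> real^'p \<Rightarrow> real^'p" where
  "Fmap P zs = (\<chi> j. Fj P j (zs $ j))"

definition bidx :: "'p::finite copula \<Rightarrow> 'p \<Rightarrow> nat set" where
  "bidx P j = (case ty P j of Cont \<Rightarrow> {1} | Disc \<Rightarrow> {1..Kn P j})"

definition linpred :: "'p::finite copula \<Rightarrow> ('p,'q) latreg \<Rightarrow> real^'p \<Rightarrow> real" where
  "linpred P R z = b0 R + (\<Sum>j\<in>UNIV. case ty P j of
      Cont \<Rightarrow> bet R j 1 * z $ j
    | Disc \<Rightarrow> (\<Sum>k\<in>{1..Kn P j}. bet R j k * (if z $ j \<ge> real k then 1 else 0)))"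

definition nonnull :: "'p::finite copula \<Rightarrow> ('p,'q) latreg \<Rightarrow> 'p set" where
  "nonnull P R = {j. \<exists>k\<in>bidx P j. bet R j k \<noteq> 0}"

definition valid_latreg :: "('p::finite,'q) latreg \<Rightarrow> bool" where
  "valid_latreg R \<longleftrightarrow> s2 R > 0 \<and>
     (\<forall>j t y. 0 \<le> hh R j t y) \<and> (\<forall>j t. (\<lambda>y. hh R j t y) sums 1) \<and>
     (\<forall>j y. (\<lambda>t. hh R j t y) \<in> borel_measurable borel)"

(* law of Y_i given Z_i = z (theta integrated out; items cond. independent given theta) *)
definition Ylaw :: "'p::finite copula \<Rightarrow> ('p,'q::finite) latreg \<Rightarrow> real^'p \<Rightarrow> ('q \<Rightarrow> nat) measure" where
  "Ylaw P R z = density (count_space UNIV)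
     (\<lambda>y. \<integral>\<^sup>+ t. ennreal ((\<Prod>j\<in>UNIV. hh R j t (y j)) * normal_density (linpred P R z) (sqrt (s2 R)) t) \<partial>lborel)"

definition valid_missing :: "'p::finite copula \<Rightarrow> ('p,'q) latreg \<Rightarrow> (real^'p \<Rightarrow> 'p set \<Rightarrow> real) \<Rightarrow> bool" where
  "valid_missing P R q \<longleftrightarrow>
     (\<forall>z a. 0 \<le> q z a) \<and> (\<forall>z. (\<Sum>a\<in>UNIV. q z a) = 1) \<and>
     (\<forall>a. (\<lambda>z. q z a) \<in> borel_measurable borel) \<and>
     (\<forall>a z z'. (\<forall>k\<in>a \<inter> nonnull P R. z $ k = z' $ k) \<longrightarrow> q z a = q z' a)"

definition Aker :: "(real^'p::finite \<Rightarrow> 'p set \<Rightarrow> real) \<Rightarrow> real^'p \<Rightarrow> 'p set measure" where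
  "Aker q z = density (count_space UNIV) (\<lambda>a. ennreal (q z a))"

definition gauss1 :: "real \<Rightarrow> real measure" where
  "gauss1 v = (if v = 0 then return borel 0 else density lborel (\<lambda>x. ennreal (normal_density 0 (sqrt v) x)))"

definition is_gauss :: "real^'n::finite^'n \<Rightarrow> (real^'n) measure \<Rightarrow> bool" where
  "is_gauss C \<mu> \<longleftrightarrow> prob_space \<mu> \<and> sets \<mu> = sets borel \<and>
     (\<forall>t. distr \<mu> borel (\<lambda>x. t \<bullet> x) = gauss1 (t \<bullet> (C *v t)))"

definition block_G :: "real^'p::finite^'p \<Rightarrow> real^'p^'p \<Rightarrow> real^('p + 'p)^('p + 'p)" where
  "block_G Sg S = (\<chi> a b. case (a, b) of
      (Inl i, Inl j) \<Rightarrow> Sg $ i $ j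
    | (Inl i, Inr j) \<Rightarrow> (Sg - S) $ i $ j
    | (Inr i, Inl j) \<Rightarrow> (Sg - S) $ i $ j
    | (Inr i, Inr j) \<Rightarrow> Sg $ i $ j)"

definition join2 :: "real^'p::finite \<Rightarrow> real^'p \<Rightarrow> real^('p + 'p)" where
  "join2 x y = (\<chi> a. case a of Inl i \<Rightarrow> x $ i | Inr i \<Rightarrow> y $ i)"

(* encoding of {Z_j : j in alpha}: coordinates outside alpha set to 0 (alpha is always carried along) *)
definition mask :: "'p::finite set \<Rightarrow> real^'p \<Rightarrow> real^'p" where
  "mask a z = (\<chi> j. if j \<in> a then z $ j else 0)"

definition swapS :: "'p::finite set \<Rightarrow> (real^'p) \<times> (real^'p) \<Rightarrow> (real^'p) \<times> (real^'p)" where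
  "swapS T zz = (\<chi> j. if j \<in> T then snd zz $ j else fst zz $ j,
                 \<chi> j. if j \<in> T then fst zz $ j else snd zz $ j)"

abbreviation ZS :: "(real^'p::finite) measure" where "ZS \<equiv> borel"
abbreviation YS :: "('q \<Rightarrow> nat) measure" where "YS \<equiv> count_space UNIV"
abbreviation AS :: "'p::finite set measure" where "AS \<equiv> count_space UNIV"

definition truth :: "'p::finite copula \<Rightarrow> ('p,'q::finite) latreg \<Rightarrow> (real^'p \<Rightarrow> 'p set \<Rightarrow> real)
    \<Rightarrow> (real^'p) measure \<Rightarrow> ((real^'p) \<times> 'p set \<times> ('q \<Rightarrow> nat)) measure" where
  "truth P R q NZ = bind NZ (\<lambda>zs. bind (Aker q (Fmap P zs)) (\<lambda>a. bind (Ylaw P R (Fmap P zs))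
      (\<lambda>y. return (ZS \<Otimes>\<^sub>M AS \<Otimes>\<^sub>M YS) (zs, a, y))))"

definition modelZY :: "'p::finite copula \<Rightarrow> ('p,'q::finite) latreg \<Rightarrow> (real^'p) measure
    \<Rightarrow> ((real^'p) \<times> ('q \<Rightarrow> nat)) measure" where
  "modelZY P R NZ = bind NZ (\<lambda>zs. bind (Ylaw P R (Fmap P zs)) (\<lambda>y. return (ZS \<Otimes>\<^sub>M YS) (zs, y)))"

(* K a is a (regular) conditional distribution of Z* given (Z_a, Y) under the joint model *)
definition cond_kernel :: "'p::finite copula \<Rightarrow> ('p,'q::finite) latreg \<Rightarrow> (real^'p) measure
    \<Rightarrow> 'p set \<Rightarrow> ((real^'p) \<times> ('q \<Rightarrow> nat) \<Rightarrow> (real^'p) measure) \<Rightarrow> bool" where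
  "cond_kernel P R NZ a K \<longleftrightarrow>
     K \<in> ZS \<Otimes>\<^sub>M YS \<rightarrow>\<^sub>M prob_algebra ZS \<and>
     distr (modelZY P R NZ) (ZS \<Otimes>\<^sub>M YS \<Otimes>\<^sub>M ZS) (\<lambda>(zs, y). (mask a (Fmap P zs), y, zs)) =
     bind (distr (modelZY P R NZ) (ZS \<Otimes>\<^sub>M YS) (\<lambda>(zs, y). (mask a (Fmap P zs), y)))
          (\<lambda>(zo, y). bind (K (zo, y)) (\<lambda>w. return (ZS \<Otimes>\<^sub>M YS \<Otimes>\<^sub>M ZS) (zo, y, w)))"

definition out_law :: "'p::finite copula \<Rightarrow> ('p,'q::finite) latreg \<Rightarrow> (real^'p \<Rightarrow> 'p set \<Rightarrow> real)
    \<Rightarrow> (real^'p) measure \<Rightarrow> ('p set \<Rightarrow> (real^'p) \<times> ('q \<Rightarrow> nat) \<Rightarrow> (real^'p) measure)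
    \<Rightarrow> (real^'p \<Rightarrow> (real^'p) measure)
    \<Rightarrow> ((real^'p) \<times> 'p set \<times> ('q \<Rightarrow> nat) \<times> (real^'p)) measure" where
  "out_law P R q NZ K1 K2 = bind (truth P R q NZ) (\<lambda>(zs, a, y).
      bind (K1 a (mask a (Fmap P zs), y)) (\<lambda>w. bind (K2 w) (\<lambda>wt.
        return (ZS \<Otimes>\<^sub>M AS \<Otimes>\<^sub>M YS \<Otimes>\<^sub>M ZS) (mask a (Fmap P zs), a, y, mask a (Fmap P wt)))))"

(* Knockoff definition, at the level of the joint law L of (Z^obs, A, Y, tilde Z^obs):
   there is a joint law of complete (Z, tilde Z, Y, A) such that
   (2)+(3): Z ~ Gaussian copula, and given Z, tilde Z, Y, A are conditionally independent
            with Y | Z following the latent regression model;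
   (1): its image under masking is L;  (4): (Z, tilde Z) is swap-invariant. *)
definition is_knockoff :: "'p::finite copula \<Rightarrow> ('p,'q::finite) latreg
    \<Rightarrow> ((real^'p) \<times> 'p set \<times> ('q \<Rightarrow> nat) \<times> (real^'p)) measure \<Rightarrow> bool" where
  "is_knockoff P R L \<longleftrightarrow> (\<exists>\<nu> kt ka.
     is_gauss (Sig P) \<nu> \<and> kt \<in> ZS \<rightarrow>\<^sub>M prob_algebra ZS \<and> ka \<in> ZS \<rightarrow>\<^sub>M prob_algebra AS \<and>
     (let \<mu> = bind (distr \<nu> ZS (Fmap P)) (\<lambda>z. bind (kt z) (\<lambda>zt. bind (Ylaw P R z) (\<lambda>y.
                 bind (ka z) (\<lambda>a. return (ZS \<Otimes>\<^sub>M ZS \<Otimes>\<^sub>M YS \<Otimes>\<^sub>M AS) (z, zt, y, a)))));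
          \<mu>2 = distr \<mu> (ZS \<Otimes>\<^sub>M ZS) (\<lambda>(z, zt, y, a). (z, zt))
      in distr \<mu> (ZS \<Otimes>\<^sub>M AS \<Otimes>\<^sub>M YS \<Otimes>\<^sub>M ZS) (\<lambda>(z, zt, y, a). (mask a z, a, y, mask a zt)) = L \<and>
         (\<forall>T. distr \<mu>2 (ZS \<Otimes>\<^sub>M ZS) (swapS T) = \<mu>2)))"

end

theory Submission
  imports Defs "HOL-Probability.Probability"
begin



definition tp :: "('a::euclidean_space \<Rightarrow> real) \<Rightarrow> bool" where
 "tp h \<longleftrightarrow> (\<exists>xs::(complex \<times> 'a) list. \<forall>x. complex_of_real (h x) = (\<Sum>(c,t)\<leftarrow>xs. c * cis (t \<bullet> x)))"

lemma tp_const: "tp (\<lambda>x. c)"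
  unfolding tp_def by (rule exI[of _ "[(complex_of_real c, 0)]"]) simp

lemma tp_add: "tp f \<Longrightarrow> tp g \<Longrightarrow> tp (\<lambda>x. f x + g x)"
  unfolding tp_def
proof (elim exE)
  fix xs ys :: "(complex \<times> 'a) list"
  assume A: "\<forall>x. complex_of_real (f x) = (\<Sum>(c,t)\<leftarrow>xs. c * cis (t \<bullet> x))"
     and B: "\<forall>x. complex_of_real (g x) = (\<Sum>(c,t)\<leftarrow>ys. c * cis (t \<bullet> x))"
  show "\<exists>zs::(complex \<times> 'a) list. \<forall>x. complex_of_real (f x + g x) = (\<Sum>(c,t)\<leftarrow>zs. c * cis (t \<bullet> x))"
    by (rule exI[of _ "xs @ ys"]) (simp add: A B)
qed

lemma sum_list_mult_pairs:
  fixes F :: "'b \<Rightarrow> complex"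
  shows "(\<Sum>p\<leftarrow>xs. F p) * (\<Sum>q\<leftarrow>ys. G q) = (\<Sum>pq\<leftarrow>List.product xs ys. F (fst pq) * G (snd pq))"
  by (induction xs) (simp_all add: algebra_simps sum_list_const_mult o_def)

lemma tp_mult: "tp f \<Longrightarrow> tp g \<Longrightarrow> tp (\<lambda>x. f x * g x)"
  unfolding tp_def
proof (elim exE)
  fix xs ys :: "(complex \<times> 'a) list"
  assume A: "\<forall>x. complex_of_real (f x) = (\<Sum>(c,t)\<leftarrow>xs. c * cis (t \<bullet> x))"
     and B: "\<forall>x. complex_of_real (g x) = (\<Sum>(c,t)\<leftarrow>ys. c * cis (t \<bullet> x))"
  let ?zs = "map (\<lambda>(p,q). (fst p * fst q, snd p + snd q)) (List.product xs ys)"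
  show "\<exists>zs::(complex \<times> 'a) list. \<forall>x. complex_of_real (f x * g x) = (\<Sum>(c,t)\<leftarrow>zs. c * cis (t \<bullet> x))"
  proof (rule exI[of _ ?zs], intro allI)
    fix x
    have "complex_of_real (f x * g x) = (\<Sum>(c,t)\<leftarrow>xs. c * cis (t \<bullet> x)) * (\<Sum>(c,t)\<leftarrow>ys. c * cis (t \<bullet> x))"
      by (simp add: A B)
    also have "\<dots> = (\<Sum>pq\<leftarrow>List.product xs ys. (case fst pq of (c,t) \<Rightarrow> c * cis (t \<bullet> x)) * (case snd pq of (c,t) \<Rightarrow> c * cis (t \<bullet> x)))"
      by (rule sum_list_mult_pairs)
    also have "\<dots> = (\<Sum>(c,t)\<leftarrow>?zs. c * cis (t \<bullet> x))"
      by (simp add: o_def case_prod_beta cis_mult inner_add_left algebra_simps)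
    finally show "complex_of_real (f x * g x) = (\<Sum>(c,t)\<leftarrow>?zs. c * cis (t \<bullet> x))" .
  qed
qed

lemma tp_cos: "tp (\<lambda>x. cos (t \<bullet> x))"
  unfolding tp_def
  apply (rule exI[of _ "[(1/2, t), (1/2, -t)]"])
  apply (simp add: cis.ctr complex_eq_iff)
  done

lemma tp_sin: "tp (\<lambda>x. sin (t \<bullet> x))"
  unfolding tp_def
  apply (rule exI[of _ "[(-\<i>/2, t), (\<i>/2, -t)]"])
  apply (simp add: cis.ctr complex_eq_iff)
  done

lemma tp_sum: "finite A \<Longrightarrow> (\<And>a. a \<in> A \<Longrightarrow> tp (f a)) \<Longrightarrow> tp (\<lambda>x. \<Sum>a\<in>A. f a x)"
  by (induction A rule: finite_induct) (auto intro: tp_add tp_const)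



lemma cis_inner_meas: "sets M = sets borel \<Longrightarrow> (\<lambda>x::'a::euclidean_space. cis (t \<bullet> x)) \<in> borel_measurable M"
proof -
  assume "sets M = sets borel"
  then have "borel_measurable M = (borel_measurable borel :: ('a \<Rightarrow> complex) set)"
    by (rule measurable_cong_sets) simp
  moreover have "(\<lambda>x::'a. cis (t \<bullet> x)) \<in> borel_measurable borel"
    by (intro borel_measurable_continuous_onI continuous_intros)
  ultimately show ?thesis by simp
qed

lemma cis_meas: "cis \<in> borel_measurable borel"
  unfolding cis_conv_exp by (intro borel_measurable_continuous_onI continuous_intros)

lemma tp_int_aux:
  fixes M :: "'a::euclidean_space measure"
  assumes "prob_space M" "sets M = sets borel"
  shows "integral\<^sup>L M (\<lambda>x. \<Sum>(c,t)\<leftarrow>xs. c * cis (t \<bullet> x)) = (\<Sum>(c,t)\<leftarrow>xs. c * integral\<^sup>L M (\<lambda>x. cis (t \<bullet> x)))"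
proof -
  interpret prob_space M by fact
  have I: "integrable M (\<lambda>x. c * cis (t \<bullet> x))" for c t
  proof (rule integrable_const_bound[where B="norm c"])
    show "AE x in M. norm (c * cis (t \<bullet> x)) \<le> norm c" by (simp add: norm_mult)
    show "(\<lambda>x. c * cis (t \<bullet> x)) \<in> borel_measurable M"
      using cis_inner_meas[OF assms(2)] by measurable
  qed
  have I2: "integrable M (\<lambda>x. \<Sum>(c,t)\<leftarrow>xs. c * cis (t \<bullet> x))" for xs :: "(complex \<times> 'a) list"
  proof (induction xs)
    case Nil then show ?case by simp
  next
    case (Cons a xs)
    obtain c t where a: "a = (c,t)" by force
    show ?case unfolding a using Cons I by simp
  qed
  show ?thesis
  proof (induction xs)
    case Nil then show ?case by simp
  next
    case (Cons a xs)
    obtain c t where a: "a = (c,t)" by force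
    have "integral\<^sup>L M (\<lambda>x. \<Sum>(c,t)\<leftarrow>a#xs. c * cis (t \<bullet> x))
        = integral\<^sup>L M (\<lambda>x. c * cis (t \<bullet> x) + (\<Sum>(c,t)\<leftarrow>xs. c * cis (t \<bullet> x)))" by (simp add: a)
    also have "\<dots> = integral\<^sup>L M (\<lambda>x. c * cis (t \<bullet> x)) + integral\<^sup>L M (\<lambda>x. \<Sum>(c,t)\<leftarrow>xs. c * cis (t \<bullet> x))"
      by (rule Bochner_Integration.integral_add[OF I I2])
    also have "\<dots> = c * integral\<^sup>L M (\<lambda>x. cis (t \<bullet> x)) + (\<Sum>(c,t)\<leftarrow>xs. c * integral\<^sup>L M (\<lambda>x. cis (t \<bullet> x)))"
      using Cons by simp
    finally show ?case by (simp add: a)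
  qed
qed

lemma tp_integral_eq:
  fixes \<mu> \<nu> :: "'a::euclidean_space measure"
  assumes pm: "prob_space \<mu>" "prob_space \<nu>" and sm: "sets \<mu> = sets borel" "sets \<nu> = sets borel"
    and proj: "\<And>t. distr \<mu> borel (\<lambda>x. t \<bullet> x) = distr \<nu> borel (\<lambda>x. t \<bullet> x)"
    and h: "tp h"
  shows "integral\<^sup>L \<mu> h = integral\<^sup>L \<nu> h"
proof -
  obtain xs :: "(complex \<times> 'a) list" where xs: "\<And>x. complex_of_real (h x) = (\<Sum>(c,t)\<leftarrow>xs. c * cis (t \<bullet> x))"
    using h unfolding tp_def by blast
  have cisq: "integral\<^sup>L \<mu> (\<lambda>x. cis (t \<bullet> x)) = integral\<^sup>L \<nu> (\<lambda>x. cis (t \<bullet> x))" for t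
  proof -
    have mb: "(\<lambda>x::'a. t \<bullet> x) \<in> measurable borel borel" by simp
    have m1: "(\<lambda>x. t \<bullet> x) \<in> measurable \<mu> borel" "(\<lambda>x. t \<bullet> x) \<in> measurable \<nu> borel"
      using mb measurable_cong_sets[OF sm(1) refl] measurable_cong_sets[OF sm(2) refl] by blast+
    have "integral\<^sup>L \<mu> (\<lambda>x. cis (t \<bullet> x)) = integral\<^sup>L (distr \<mu> borel (\<lambda>x. t \<bullet> x)) cis"
      by (rule integral_distr[symmetric]) (use m1 cis_meas in auto)
    also have "\<dots> = integral\<^sup>L (distr \<nu> borel (\<lambda>x. t \<bullet> x)) cis" by (simp only: proj)
    also have "\<dots> = integral\<^sup>L \<nu> (\<lambda>x. cis (t \<bullet> x))"
      by (rule integral_distr) (use m1 cis_meas in auto)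
    finally show ?thesis .
  qed
  have "complex_of_real (integral\<^sup>L \<mu> h) = integral\<^sup>L \<mu> (\<lambda>x. complex_of_real (h x))" by (rule integral_complex_of_real[symmetric])
  also have "\<dots> = integral\<^sup>L \<mu> (\<lambda>x. \<Sum>(c,t)\<leftarrow>xs. c * cis (t \<bullet> x))" by (simp only: xs)
  also have "\<dots> = (\<Sum>(c,t)\<leftarrow>xs. c * integral\<^sup>L \<mu> (\<lambda>x. cis (t \<bullet> x)))" by (rule tp_int_aux[OF pm(1) sm(1)])
  also have "\<dots> = (\<Sum>(c,t)\<leftarrow>xs. c * integral\<^sup>L \<nu> (\<lambda>x. cis (t \<bullet> x)))" by (simp only: cisq)
  also have "\<dots> = integral\<^sup>L \<nu> (\<lambda>x. \<Sum>(c,t)\<leftarrow>xs. c * cis (t \<bullet> x))" by (rule tp_int_aux[OF pm(2) sm(2), symmetric])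
  also have "\<dots> = integral\<^sup>L \<nu> (\<lambda>x. complex_of_real (h x))" by (simp only: xs)
  also have "\<dots> = complex_of_real (integral\<^sup>L \<nu> h)" by (rule integral_complex_of_real)
  finally show ?thesis by simp
qed


definition Phi :: "real \<Rightarrow> 'a::euclidean_space \<Rightarrow> 'a \<times> 'a" where
 "Phi M x = ((\<Sum>b\<in>Basis. cos (pi * (x \<bullet> b) / M) *\<^sub>R b), (\<Sum>b\<in>Basis. sin (pi * (x \<bullet> b) / M) *\<^sub>R b))"

lemma tp_cos': "tp (\<lambda>x::'a::euclidean_space. cos (pi * (x \<bullet> b) / M))"
proof -
  have "(\<lambda>x::'a. cos (pi * (x \<bullet> b) / M)) = (\<lambda>x. cos (((pi / M) *\<^sub>R b) \<bullet> x))"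
    by (simp add: inner_commute)
  then show ?thesis using tp_cos by metis
qed

lemma tp_sin': "tp (\<lambda>x::'a::euclidean_space. sin (pi * (x \<bullet> b) / M))"
proof -
  have "(\<lambda>x::'a. sin (pi * (x \<bullet> b) / M)) = (\<lambda>x. sin (((pi / M) *\<^sub>R b) \<bullet> x))"
    by (simp add: inner_commute)
  then show ?thesis using tp_sin by metis
qed

lemma Phi_sum: "Phi M x = (\<Sum>b\<in>(Basis::'a::euclidean_space set). cos (pi * (x \<bullet> b) / M) *\<^sub>R (b, 0) + sin (pi * (x \<bullet> b) / M) *\<^sub>R (0, b))"
  unfolding Phi_def by (simp add: prod_eq_iff fst_sum snd_sum)

lemma tp_poly_Phi:
  fixes g :: "'a::euclidean_space \<times> 'a \<Rightarrow> real"
  assumes "real_polynomial_function g"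
  shows "tp (\<lambda>x. g (Phi M x))"
  using assms
proof (induction g rule: real_polynomial_function.induct)
  case (linear g)
  then have lin: "linear g" by (rule bounded_linear.linear)
  have "g (Phi M x) = (\<Sum>b\<in>Basis. cos (pi * (x \<bullet> b) / M) * g (b, 0) + sin (pi * (x \<bullet> b) / M) * g (0, b))" for x
    unfolding Phi_sum by (simp only: linear_sum[OF lin] linear_add[OF lin] linear_scale[OF lin] real_scaleR_def)
  moreover have "tp (\<lambda>x::'a. \<Sum>b\<in>Basis. cos (pi * (x \<bullet> b) / M) * g (b, 0) + sin (pi * (x \<bullet> b) / M) * g (0, b))"
    by (intro tp_sum tp_add tp_mult tp_cos' tp_sin' tp_const finite_Basis)
  ultimately show ?case by simp
next
  case (const c) then show ?case by (rule tp_const)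
next
  case (add f g) then show ?case by (intro tp_add)
next
  case (mult f g) then show ?case by (intro tp_mult)
qed



lemma cont_meas: "continuous_on UNIV f \<Longrightarrow> sets M = sets borel \<Longrightarrow> (f::'a::topological_space \<Rightarrow> 'b::topological_space) \<in> borel_measurable M"
  using borel_measurable_continuous_onI measurable_cong_sets[of M borel "borel::'b measure" borel] by blast

lemma Phi_cont: "continuous_on UNIV (Phi M :: 'a::euclidean_space \<Rightarrow> 'a \<times> 'a)"
  unfolding Phi_def divide_inverse by (intro continuous_intros)

lemma norm_Phi: "norm (Phi M (x::'a::euclidean_space)) \<le> 2 * real DIM('a)"
proof -
  have n: "norm (\<Sum>b\<in>(Basis::'a set). f b *\<^sub>R b) \<le> real DIM('a)" if "\<And>b. \<bar>f b\<bar> \<le> 1" for f :: "'a \<Rightarrow> real"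
  proof -
    have "norm (\<Sum>b\<in>(Basis::'a set). f b *\<^sub>R b) \<le> (\<Sum>b\<in>(Basis::'a set). norm (f b *\<^sub>R b))" by (rule norm_sum)
    also have "\<dots> \<le> (\<Sum>b\<in>(Basis::'a set). 1)" by (intro sum_mono) (simp add: that)
    finally show ?thesis by simp
  qed
  have "norm (Phi M x) \<le> norm (\<Sum>b\<in>(Basis::'a set). cos (pi * (x \<bullet> b) / M) *\<^sub>R b) + norm (\<Sum>b\<in>(Basis::'a set). sin (pi * (x \<bullet> b) / M) *\<^sub>R b)"
    unfolding Phi_def by (rule norm_Pair_le)
  also have "\<dots> \<le> real DIM('a) + real DIM('a)" by (intro add_mono n) auto
  finally show ?thesis by simp
qed

lemma cont_Phi_eq:
  fixes \<mu> \<nu> :: "'a::euclidean_space measure" and F :: "'a \<times> 'a \<Rightarrow> real"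
  assumes pm: "prob_space \<mu>" "prob_space \<nu>" and sm: "sets \<mu> = sets borel" "sets \<nu> = sets borel"
    and proj: "\<And>t. distr \<mu> borel (\<lambda>x. t \<bullet> x) = distr \<nu> borel (\<lambda>x. t \<bullet> x)"
    and F: "continuous_on UNIV F"
  shows "integral\<^sup>L \<mu> (\<lambda>x. F (Phi M x)) = integral\<^sup>L \<nu> (\<lambda>x. F (Phi M x))"
proof -
  define S :: "('a \<times> 'a) set" where "S = cball 0 (2 * real DIM('a))"
  have PS: "Phi M x \<in> S" for x using norm_Phi[of M x] by (simp add: S_def)
  have cS: "compact S" by (simp add: S_def)
  have FPc: "continuous_on UNIV (\<lambda>x. F (Phi M x))"
    using continuous_on_compose[OF Phi_cont continuous_on_subset[OF F]] by (simp add: o_def)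
  obtain B where B: "\<And>p. p \<in> S \<Longrightarrow> \<bar>F p\<bar> \<le> B"
    using compact_imp_bounded[OF compact_continuous_image[OF continuous_on_subset[OF F] cS]]
    unfolding bounded_iff by (metis image_eqI real_norm_def subset_UNIV)
  have intF: "integrable N (\<lambda>x. F (Phi M x))" if "prob_space N" "sets N = sets borel" for N
  proof -
    interpret prob_space N by fact
    show ?thesis
    proof (rule integrable_const_bound[where B=B])
      show "AE x in N. norm (F (Phi M x)) \<le> B" using B PS by simp
      show "(\<lambda>x. F (Phi M x)) \<in> borel_measurable N"
        by (rule cont_meas[OF FPc that(2)])
    qed
  qed
  have key: "\<bar>integral\<^sup>L \<mu> (\<lambda>x. F (Phi M x)) - integral\<^sup>L \<nu> (\<lambda>x. F (Phi M x))\<bar> \<le> 2 * e" if e: "e > 0" for e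
  proof -
    obtain g where g: "real_polynomial_function g" and ge: "\<And>p. p \<in> S \<Longrightarrow> \<bar>F p - g p\<bar> < e"
      using Stone_Weierstrass_real_polynomial_function[OF cS continuous_on_subset[OF F] e] by blast
    have gc: "continuous_on UNIV g"
      using g continuous_on_polymonial_function real_polynomial_function_eq by blast
    have gPc: "continuous_on UNIV (\<lambda>x. g (Phi M x))"
      using continuous_on_compose[OF Phi_cont continuous_on_subset[OF gc]] by (simp add: o_def)
    have tpg: "tp (\<lambda>x. g (Phi M x))" by (rule tp_poly_Phi[OF g])
    have bnd: "\<bar>integral\<^sup>L N (\<lambda>x. F (Phi M x)) - integral\<^sup>L N (\<lambda>x. g (Phi M x))\<bar> \<le> e"
      if "prob_space N" "sets N = sets borel" for N
    proof -
      interpret prob_space N by fact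
      have iD: "integrable N (\<lambda>x. F (Phi M x) - g (Phi M x))"
      proof (rule integrable_const_bound[where B=e])
        show "AE x in N. norm (F (Phi M x) - g (Phi M x)) \<le> e" using ge PS by (simp add: less_imp_le)
        show "(\<lambda>x. F (Phi M x) - g (Phi M x)) \<in> borel_measurable N"
          using cont_meas[OF _ that(2)] FPc gPc by (intro borel_measurable_diff) auto
      qed
      have iF: "integrable N (\<lambda>x. F (Phi M x))" by (rule intF[OF that])
      have iG: "integrable N (\<lambda>x. g (Phi M x))"
        using Bochner_Integration.integrable_diff[OF iF iD] by simp
      have "\<bar>integral\<^sup>L N (\<lambda>x. F (Phi M x) - g (Phi M x))\<bar> \<le> integral\<^sup>L N (\<lambda>x. e)"
      proof (rule integral_abs_bound_integral[OF iD])
        fix x show "\<bar>F (Phi M x) - g (Phi M x)\<bar> \<le> e" using ge[OF PS[of x]] by simp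
      qed simp
      also have "\<dots> = e" by (simp add: prob_space)
      finally show ?thesis using Bochner_Integration.integral_diff[OF iF iG] by simp
    qed
    have "integral\<^sup>L \<mu> (\<lambda>x. g (Phi M x)) = integral\<^sup>L \<nu> (\<lambda>x. g (Phi M x))"
      by (rule tp_integral_eq[OF pm sm proj tpg])
    then show ?thesis using bnd[OF pm(1) sm(1)] bnd[OF pm(2) sm(2)] by linarith
  qed
  show ?thesis
  proof (rule ccontr)
    assume ne: "\<not> ?thesis"
    let ?d = "\<bar>integral\<^sup>L \<mu> (\<lambda>x. F (Phi M x)) - integral\<^sup>L \<nu> (\<lambda>x. F (Phi M x))\<bar>"
    have "?d > 0" using ne by simp
    then have "?d \<le> 2 * (?d / 4)" using key[of "?d/4"] by simp
    then show False using \<open>?d > 0\<close> by simp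
  qed
qed



lemma closed_Phi_eq:
  fixes \<mu> \<nu> :: "'a::euclidean_space measure" and C :: "('a \<times> 'a) set"
  assumes pm: "prob_space \<mu>" "prob_space \<nu>" and sm: "sets \<mu> = sets borel" "sets \<nu> = sets borel"
    and proj: "\<And>t. distr \<mu> borel (\<lambda>x. t \<bullet> x) = distr \<nu> borel (\<lambda>x. t \<bullet> x)"
    and C: "closed C"
  shows "measure \<mu> (Phi M -` C) = measure \<nu> (Phi M -` C)"
proof (cases "C = {}")
  case True then show ?thesis by simp
next
  case False
  define s :: "nat \<Rightarrow> 'a \<Rightarrow> real" where "s k x = max 0 (1 - real k * infdist (Phi M x) C)" for k x
  have sc: "continuous_on UNIV (s k)" for k
    unfolding s_def by (intro continuous_intros Phi_cont)
  have scF: "s k x = (\<lambda>p. max 0 (1 - real k * infdist p C)) (Phi M x)" for k x by (simp add: s_def)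
  have clo: "closed (Phi M -` C)"
    using continuous_closed_vimage[OF C] Phi_cont continuous_on_eq_continuous_at by blast
  have lim: "(\<lambda>k. s k x) \<longlonglongrightarrow> indicator (Phi M -` C) x" for x
  proof (cases "Phi M x \<in> C")
    case True
    then have "infdist (Phi M x) C = 0" using in_closed_iff_infdist_zero[OF C False] by simp
    then show ?thesis using True by (simp add: s_def)
  next
    case nC: False
    define d where "d = infdist (Phi M x) C"
    have dpos: "d > 0" using nC in_closed_iff_infdist_zero[OF C False] infdist_nonneg[of "Phi M x" C]
      by (simp add: d_def)
    obtain N :: nat where N: "1 / d < real N" using reals_Archimedean2 by blast
    have "eventually (\<lambda>k. s k x = 0) sequentially"
      unfolding eventually_sequentially
    proof (intro exI allI impI)
      fix k assume "N \<le> k"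
      then have "1 / d < real k" using N by (meson less_le_trans of_nat_le_iff)
      then have "1 < real k * d" using dpos by (simp add: field_simps)
      then show "s k x = 0" by (simp add: s_def d_def)
    qed
    then have "(\<lambda>k. s k x) \<longlonglongrightarrow> 0" by (rule tendsto_eventually)
    then show ?thesis using nC by simp
  qed
  have conv: "(\<lambda>k. integral\<^sup>L N (s k)) \<longlonglongrightarrow> measure N (Phi M -` C)"
    if "prob_space N" "sets N = sets borel" for N :: "'a measure"
  proof -
    interpret prob_space N by fact
    have spN: "space N = UNIV" using sets_eq_imp_space_eq[OF that(2)] by simp
    have meas: "Phi M -` C \<in> sets N" using that(2) clo by simp
    have "(\<lambda>k. integral\<^sup>L N (s k)) \<longlonglongrightarrow> integral\<^sup>L N (indicator (Phi M -` C))"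
    proof (rule integral_dominated_convergence[where w="\<lambda>_. 1"])
      show "indicator (Phi M -` C) \<in> borel_measurable N" using meas by simp
      show "s k \<in> borel_measurable N" for k by (rule cont_meas[OF sc that(2)])
      show "integrable N (\<lambda>_. 1::real)" by simp
      show "AE x in N. (\<lambda>k. s k x) \<longlonglongrightarrow> indicator (Phi M -` C) x" using lim by simp
      show "AE x in N. norm (s k x) \<le> 1" for k
        using infdist_nonneg[of _ C] by (simp add: s_def)
    qed
    then show ?thesis using spN by simp
  qed
  have "(\<lambda>k. integral\<^sup>L \<mu> (s k)) = (\<lambda>k. integral\<^sup>L \<nu> (s k))"
  proof
    fix k show "integral\<^sup>L \<mu> (s k) = integral\<^sup>L \<nu> (s k)"
      unfolding scF by (rule cont_Phi_eq[OF pm sm proj]) (intro continuous_intros)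
  qed
  then show ?thesis using conv[OF pm(1) sm(1)] conv[OF pm(2) sm(2)] LIMSEQ_unique by metis
qed



lemma Phi_inj_local:
  fixes x y :: "'a::euclidean_space"
  assumes M: "M > 0" and eq: "Phi M x = Phi M y" and d: "norm (x - y) \<le> M"
  shows "x = y"
proof (rule euclidean_eqI)
  fix b :: 'a assume b: "b \<in> Basis"
  have c: "cos (pi * (x \<bullet> b) / M) = cos (pi * (y \<bullet> b) / M)"
    using arg_cong[OF eq, of "\<lambda>p. fst p \<bullet> b"] b by (simp add: Phi_def)
  have s: "sin (pi * (x \<bullet> b) / M) = sin (pi * (y \<bullet> b) / M)"
    using arg_cong[OF eq, of "\<lambda>p. snd p \<bullet> b"] b by (simp add: Phi_def)
  obtain n :: int where n: "pi * (x \<bullet> b) / M = pi * (y \<bullet> b) / M + 2 * pi * n"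
    using sin_cos_eq_iff[of "pi * (x \<bullet> b) / M" "pi * (y \<bullet> b) / M"] c s by auto
  have "\<bar>x \<bullet> b - y \<bullet> b\<bar> \<le> M"
    using Basis_le_norm[OF b, of "x - y"] d by (simp add: inner_diff_left)
  then have le: "\<bar>x \<bullet> b - y \<bullet> b\<bar> / M \<le> 1" using M by simp
  have "pi * (x \<bullet> b) / M - pi * (y \<bullet> b) / M = pi * ((x \<bullet> b - y \<bullet> b) / M)"
    by (simp add: diff_divide_distrib right_diff_distrib)
  then have "\<bar>pi * (x \<bullet> b) / M - pi * (y \<bullet> b) / M\<bar> = pi * (\<bar>x \<bullet> b - y \<bullet> b\<bar> / M)"
    using M pi_gt_zero by (simp add: abs_mult)
  also have "\<dots> \<le> pi * 1" by (rule mult_left_mono[OF le]) simp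
  finally have "\<bar>pi * (x \<bullet> b) / M - pi * (y \<bullet> b) / M\<bar> \<le> pi" by simp
  then have "\<bar>2 * pi * n\<bar> \<le> pi" using n by simp
  then have "\<bar>2 * real_of_int n\<bar> \<le> 1" using pi_gt_zero by (simp add: abs_mult)
  then have "n = 0" by linarith
  then show "x \<bullet> b = y \<bullet> b" using n M by simp
qed



lemma compact_le:
  fixes \<mu> \<nu> :: "'a::euclidean_space measure" and K :: "'a set"
  assumes pm: "prob_space \<mu>" "prob_space \<nu>" and sm: "sets \<mu> = sets borel" "sets \<nu> = sets borel"
    and proj: "\<And>t. distr \<mu> borel (\<lambda>x. t \<bullet> x) = distr \<nu> borel (\<lambda>x. t \<bullet> x)"
    and K: "compact K"
  shows "measure \<mu> K \<le> measure \<nu> K"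
proof -
  interpret m: prob_space \<mu> by fact
  interpret n: prob_space \<nu> by fact
  obtain r where r: "\<And>y. y \<in> K \<Longrightarrow> norm y \<le> r" and r0: "r \<ge> 0"
    using compact_imp_bounded[OF K] unfolding bounded_iff by (meson norm_ge_zero order_trans linear)
  define B where "B n = {x::'a. real n < norm x}" for n :: nat
  define A where "A n = Phi (real n + r + 1) -` (Phi (real n + r + 1) ` K)" for n :: nat
  have Kb: "K \<in> sets borel" using K by (simp add: compact_imp_closed)
  have Bb: "B n \<in> sets borel" for n unfolding B_def by (simp add: open_Collect_less continuous_on_norm_id borel_open)
  have Ab: "closed (A n)" for n
  proof -
    have "closed (Phi (real n + r + 1) ` K)"
      by (intro compact_imp_closed compact_continuous_image continuous_on_subset[OF Phi_cont] K) simp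
    then show ?thesis unfolding A_def
      using continuous_closed_vimage Phi_cont continuous_on_eq_continuous_at by blast
  qed
  have KA: "K \<subseteq> A n" for n unfolding A_def by auto
  have AKB: "A n \<subseteq> K \<union> B n" for n
  proof
    fix x assume xA: "x \<in> A n"
    show "x \<in> K \<union> B n"
    proof (cases "x \<in> B n")
      case True then show ?thesis by simp
    next
      case False
      then have nx: "norm x \<le> real n" by (simp add: B_def)
      obtain y where y: "y \<in> K" "Phi (real n + r + 1) x = Phi (real n + r + 1) y" using xA by (auto simp: A_def)
      have "norm (x - y) \<le> norm x + norm y" by (rule norm_triangle_ineq4)
      also have "\<dots> \<le> real n + r + 1" using nx r[OF y(1)] by simp
      finally have "x = y" using Phi_inj_local[OF _ y(2)] r0 by simp
      then show ?thesis using y by simp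
    qed
  qed
  have ineq: "measure \<mu> K \<le> measure \<nu> K + measure \<nu> (B n)" for n
  proof -
    have "measure \<mu> K \<le> measure \<mu> (A n)"
      using KA[of n] Ab[of n] sm by (intro m.finite_measure_mono) (auto simp: borel_closed)
    also have "\<dots> = measure \<nu> (A n)"
      unfolding A_def by (rule closed_Phi_eq[OF pm sm proj]) (intro compact_imp_closed compact_continuous_image continuous_on_subset[OF Phi_cont] K, simp)
    also have "\<dots> \<le> measure \<nu> (K \<union> B n)"
      using AKB[of n] Kb Bb[of n] sm by (intro n.finite_measure_mono) auto
    also have "\<dots> \<le> measure \<nu> K + measure \<nu> (B n)"
      using Kb Bb[of n] sm by (intro measure_Un_le) auto
    finally show ?thesis .
  qed
  have "(\<lambda>n. measure \<nu> (B n)) \<longlonglongrightarrow> measure \<nu> (\<Inter>n. B n)"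
    by (rule n.finite_Lim_measure_decseq) (use Bb sm in \<open>auto simp: decseq_def B_def\<close>)
  moreover have "(\<Inter>n. B n) = {}"
  proof -
    have "x \<notin> (\<Inter>n. B n)" for x
      using reals_Archimedean2[of "norm x"] by (auto simp: B_def not_less intro: less_imp_le)
    then show ?thesis by blast
  qed
  ultimately have "(\<lambda>n. measure \<nu> K + measure \<nu> (B n)) \<longlonglongrightarrow> measure \<nu> K + 0"
    by (intro tendsto_add tendsto_const) simp
  then have "measure \<mu> K \<le> measure \<nu> K + 0"
    by (rule LIMSEQ_le_const) (use ineq in auto)
  then show ?thesis by simp
qed



theorem cramer_wold:
  fixes \<mu> \<nu> :: "'a::euclidean_space measure"
  assumes pm: "prob_space \<mu>" "prob_space \<nu>" and sm: "sets \<mu> = sets borel" "sets \<nu> = sets borel"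
    and proj: "\<And>t. distr \<mu> borel (\<lambda>x. t \<bullet> x) = distr \<nu> borel (\<lambda>x. t \<bullet> x)"
  shows "\<mu> = \<nu>"
proof -
  interpret m: prob_space \<mu> by fact
  interpret n: prob_space \<nu> by fact
  have cpt: "measure \<mu> K = measure \<nu> K" if "compact K" for K
    using compact_le[OF pm sm proj that] compact_le[OF pm(2,1) sm(2,1) proj[symmetric] that] by simp
  have cl: "measure \<mu> X = measure \<nu> X" if X: "closed X" for X :: "'a set"
  proof -
    define C where "C n = X \<inter> cball 0 (real n)" for n :: nat
    have Cc: "compact (C n)" for n unfolding C_def using X by (simp add: closed_Int_compact)
    have Cs: "C n \<in> sets borel" for n using Cc by (simp add: compact_imp_closed)
    have inc: "incseq C" unfolding C_def incseq_def by (auto simp: subset_eq)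
    have U: "(\<Union>n. C n) = X"
    proof -
      have "x \<in> (\<Union>n. C n)" if "x \<in> X" for x
      proof -
        obtain n :: nat where "norm x < real n" using reals_Archimedean2 by blast
        then show ?thesis using that by (auto simp: C_def intro!: exI[of _ n])
      qed
      then show ?thesis by (auto simp: C_def)
    qed
    have "(\<lambda>n. measure \<mu> (C n)) \<longlonglongrightarrow> measure \<mu> (\<Union>n. C n)"
      by (rule m.finite_Lim_measure_incseq) (use Cs sm inc in auto)
    moreover have "(\<lambda>n. measure \<nu> (C n)) \<longlonglongrightarrow> measure \<nu> (\<Union>n. C n)"
      by (rule n.finite_Lim_measure_incseq) (use Cs sm inc in auto)
    ultimately have "measure \<mu> (\<Union>n. C n) = measure \<nu> (\<Union>n. C n)"
      using cpt[OF Cc] LIMSEQ_unique by simp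
    then show ?thesis using U by simp
  qed
  have sig: "sets borel = sigma_sets (UNIV::'a set) (Collect closed)"
  proof -
    have "sets borel = sets (sigma (UNIV::'a set) (Collect closed))" using borel_eq_closed by metis
    then show ?thesis using sets_measure_of[of "Collect closed" "UNIV::'a set"] by simp
  qed
  show ?thesis
  proof (rule measure_eqI_generator_eq[where E="Collect closed" and \<Omega>=UNIV and A="\<lambda>_. UNIV"])
    show "Int_stable (Collect closed :: 'a set set)" by (auto simp: Int_stable_def closed_Int)
    show "Collect closed \<subseteq> Pow UNIV" by simp
    show "emeasure \<mu> X = emeasure \<nu> X" if "X \<in> Collect closed" for X
      using cl[of X] that sm by (simp add: m.emeasure_eq_measure n.emeasure_eq_measure borel_closed)
    show "sets \<mu> = sigma_sets UNIV (Collect closed)" using sm sig by simp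
    show "sets \<nu> = sigma_sets UNIV (Collect closed)" using sm sig by simp
    show "range (\<lambda>_. UNIV) \<subseteq> Collect closed" by simp
    show "(\<Union>i. UNIV) = (UNIV::'a set)" by simp
    show "emeasure \<mu> UNIV \<noteq> \<infinity>" for i :: nat by simp
  qed
qed



lemma vec_meas:
  assumes "\<And>j. (\<lambda>x. f x j) \<in> borel_measurable M"
  shows "(\<lambda>x. \<chi> j. f x j :: real^'n::finite) \<in> borel_measurable M"
proof (subst borel_measurable_euclidean_space, intro ballI)
  fix i :: "real^'n" assume "i \<in> Basis"
  then obtain j where i: "i = axis j 1" by (auto simp: Basis_vec_def)
  show "(\<lambda>x. (\<chi> j. f x j) \<bullet> i) \<in> borel_measurable M"
    unfolding i cart_eq_inner_axis[symmetric] using assms by simp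
qed

lemma card_sum_if: "finite A \<Longrightarrow> real (card {k\<in>A. P k}) = (\<Sum>k\<in>A. if P k then 1 else 0)"
  by (simp add: sum.If_cases Int_def conj_commute)

lemma Fj_meas[measurable]: "Fj P j \<in> borel_measurable borel"
proof (cases "ty P j")
  case Cont
  then show ?thesis unfolding Fj_def by simp
next
  case Disc
  have "Fj P j x = (\<Sum>k\<in>{1..Kn P j}. if thr P j k < x then 1 else 0)" for x
    using Disc by (simp only: Fj_def vtype.case card_sum_if[OF finite_atLeastAtMost])
  then have "Fj P j = (\<lambda>x. \<Sum>k\<in>{1..Kn P j}. if thr P j k < x then 1 else 0)" by blast
  then show ?thesis by simp
qed

lemma Fmap_meas[measurable]: "Fmap P \<in> borel \<rightarrow>\<^sub>M borel"
  unfolding Fmap_def by (rule vec_meas) simp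

lemma mask_meas[measurable]: "mask a \<in> borel \<rightarrow>\<^sub>M borel"
  unfolding mask_def by (rule vec_meas) simp

lemma linpred_meas[measurable]: "linpred P R \<in> borel_measurable borel"
proof -
  have "linpred P R = (\<lambda>z. b0 R + (\<Sum>j\<in>UNIV. if ty P j = Cont then bet R j 1 * z $ j
      else (\<Sum>k\<in>{1..Kn P j}. bet R j k * (if z $ j \<ge> real k then 1 else 0))))"
    by (auto simp: fun_eq_iff linpred_def intro!: sum.cong split: vtype.split)
  then show ?thesis by simp
qed



lemma nn_count_meas:
  fixes f :: "'a \<Rightarrow> 'b::countable \<Rightarrow> ennreal"
  assumes "\<And>y. (\<lambda>x. f x y) \<in> borel_measurable M"
  shows "(\<lambda>x. \<integral>\<^sup>+ y. f x y \<partial>count_space UNIV) \<in> borel_measurable M"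
proof -
  interpret sigma_finite_measure "count_space (UNIV::'b set)" by (rule sigma_finite_measure_count_space)
  have "(\<lambda>p. (\<lambda>i p. f (fst p) i) (snd p) p) \<in> borel_measurable (M \<Otimes>\<^sub>M count_space UNIV)"
    by (rule measurable_compose_countable) (use assms in simp_all)
  then have "case_prod f \<in> borel_measurable (M \<Otimes>\<^sub>M count_space UNIV)"
    by (simp add: case_prod_beta')
  then show ?thesis by (rule borel_measurable_nn_integral)
qed

lemma kernel_count:
  fixes K :: "'a \<Rightarrow> 'b::countable measure"
  assumes ps: "\<And>x. x \<in> space M \<Longrightarrow> prob_space (K x)"
    and ss: "\<And>x. x \<in> space M \<Longrightarrow> sets (K x) = sets (count_space UNIV)"
    and em: "\<And>A. (\<lambda>x. emeasure (K x) A) \<in> borel_measurable M"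
  shows "K \<in> M \<rightarrow>\<^sub>M prob_algebra (count_space UNIV)"
proof (rule measurable_prob_algebra_generated[where \<Omega>=UNIV and G="Pow UNIV"])
  show "sets (count_space UNIV) = sigma_sets (UNIV::'b set) (Pow UNIV)"
    using sigma_algebra.sigma_sets_eq[OF sigma_algebra_Pow[of "UNIV::'b set"]] by simp
qed (use assms in \<open>auto simp: Int_stable_def\<close>)

lemma density_count_kernel:
  fixes d :: "'a \<Rightarrow> 'b::countable \<Rightarrow> ennreal"
  assumes dm: "\<And>y. (\<lambda>x. d x y) \<in> borel_measurable M"
    and one: "\<And>x. x \<in> space M \<Longrightarrow> (\<integral>\<^sup>+ y. d x y \<partial>count_space UNIV) = 1"
  shows "(\<lambda>x. density (count_space UNIV) (d x)) \<in> M \<rightarrow>\<^sub>M prob_algebra (count_space UNIV)"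
proof (rule kernel_count)
  fix x assume x: "x \<in> space M"
  show "prob_space (density (count_space UNIV) (d x))"
    by (rule prob_spaceI) (simp add: emeasure_density one[OF x])
  show "sets (density (count_space UNIV) (d x)) = sets (count_space UNIV)" by simp
next
  fix A :: "'b set"
  have "(\<lambda>x. emeasure (density (count_space UNIV) (d x)) A) = (\<lambda>x. \<integral>\<^sup>+ y. d x y * indicator A y \<partial>count_space UNIV)"
    by (simp add: emeasure_density)
  moreover have "(\<lambda>x. \<integral>\<^sup>+ y. d x y * indicator A y \<partial>count_space UNIV) \<in> borel_measurable M"
    by (rule nn_count_meas) (use dm in simp)
  ultimately show "(\<lambda>x. emeasure (density (count_space UNIV) (d x)) A) \<in> borel_measurable M" by simp
qed

lemma Aker_kernel[measurable]:
  assumes "valid_missing P R q"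
  shows "Aker q \<in> borel \<rightarrow>\<^sub>M prob_algebra AS"
  unfolding Aker_def
proof (rule density_count_kernel)
  fix a show "(\<lambda>x. ennreal (q x a)) \<in> borel_measurable borel"
    using assms by (simp add: valid_missing_def)
  fix x :: "real^'a"
  have "(\<integral>\<^sup>+ a. ennreal (q x a) \<partial>count_space UNIV) = (\<Sum>a\<in>UNIV. ennreal (q x a))"
    by (simp add: nn_integral_count_space_finite)
  also have "\<dots> = ennreal (\<Sum>a\<in>UNIV. q x a)"
    using assms by (intro sum_ennreal) (simp add: valid_missing_def)
  also have "\<dots> = 1" using assms by (simp add: valid_missing_def)
  finally show "(\<integral>\<^sup>+ a. ennreal (q x a) \<partial>count_space UNIV) = 1" .
qed



lemma prod_pmf_one:
  fixes h :: "'q::finite \<Rightarrow> nat \<Rightarrow> real"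
  assumes nn: "\<And>j n. 0 \<le> h j n" and s: "\<And>j. h j sums 1"
  shows "(\<integral>\<^sup>+ y. ennreal (\<Prod>j\<in>UNIV. h j (y j)) \<partial>count_space UNIV) = 1"
proof -
  have one: "(\<integral>\<^sup>+ n. ennreal (h j n) \<partial>count_space UNIV) = 1" for j
  proof -
    have "(\<integral>\<^sup>+ n. ennreal (h j n) \<partial>count_space UNIV) = (\<Sum>n. ennreal (h j n))"
      by (rule nn_integral_count_space_nat)
    also have "\<dots> = ennreal (\<Sum>n. h j n)"
      using s[of j] nn by (intro suminf_ennreal2) (auto simp: sums_iff)
    also have "\<dots> = 1" using s[of j] by (simp add: sums_iff)
    finally show ?thesis .
  qed
  define p where "p j = embed_pmf (h j)" for j
  have pp: "pmf (p j) n = h j n" for j n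
    unfolding p_def by (rule pmf_embed_pmf) (use nn one in auto)
  have "pmf (Pi_pmf UNIV 0 p) y = (\<Prod>j\<in>UNIV. h j (y j))" for y :: "'q \<Rightarrow> nat"
    by (subst pmf_Pi') (auto simp: pp)
  then have "(\<integral>\<^sup>+ y. ennreal (\<Prod>j\<in>UNIV. h j (y j)) \<partial>count_space UNIV) = (\<integral>\<^sup>+ y. pmf (Pi_pmf UNIV 0 p) y \<partial>count_space UNIV)"
    by simp
  also have "\<dots> = 1" by (simp add: nn_integral_pmf)
  finally show ?thesis .
qed

lemma Ylaw_kernel[measurable]:
  fixes P :: "'p::finite copula" and R :: "('p,'q::finite) latreg"
  assumes V: "valid_latreg R"
  shows "Ylaw P R \<in> borel \<rightarrow>\<^sub>M prob_algebra YS"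
proof -
  have hm[measurable]: "(\<lambda>t. hh R j t n) \<in> borel_measurable borel" for j n using V by (simp add: valid_latreg_def)
  have nn: "0 \<le> hh R j t n" for j t n using V by (simp add: valid_latreg_def)
  have sm: "(\<lambda>n. hh R j t n) sums 1" for j t using V by (simp add: valid_latreg_def)
  let ?f = "\<lambda>z y t. ennreal ((\<Prod>j\<in>UNIV. hh R j t (y j)) * normal_density (linpred P R z) (sqrt (s2 R)) t)"
  show ?thesis
    unfolding Ylaw_def
  proof (rule density_count_kernel)
    fix y :: "'q \<Rightarrow> nat"
    have "(\<lambda>(z, t). ?f z y t) \<in> borel_measurable (borel \<Otimes>\<^sub>M lborel)"
      unfolding normal_density_def by measurable
    then show "(\<lambda>z. \<integral>\<^sup>+ t. ?f z y t \<partial>lborel) \<in> borel_measurable borel"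
      by (rule lborel.borel_measurable_nn_integral)
  next
    fix z :: "real^'p"
    have "(\<integral>\<^sup>+ y. \<integral>\<^sup>+ t. ?f z y t \<partial>lborel \<partial>count_space UNIV) = (\<integral>\<^sup>+ t. \<integral>\<^sup>+ y. ?f z y t \<partial>count_space UNIV \<partial>lborel)"
      by (rule nn_integral_count_space_nn_integral[symmetric]) auto
    also have "\<dots> = (\<integral>\<^sup>+ t. ennreal (normal_density (linpred P R z) (sqrt (s2 R)) t) \<partial>lborel)"
    proof (rule nn_integral_cong)
      fix t
      have "(\<integral>\<^sup>+ y. ?f z y t \<partial>count_space UNIV) = (\<integral>\<^sup>+ y. ennreal (\<Prod>j\<in>UNIV. hh R j t (y j)) * ennreal (normal_density (linpred P R z) (sqrt (s2 R)) t) \<partial>count_space UNIV)"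
        by (intro nn_integral_cong) (simp add: ennreal_mult prod_nonneg nn)
      also have "\<dots> = (\<integral>\<^sup>+ y. ennreal (\<Prod>j\<in>UNIV. hh R j t (y j)) \<partial>count_space UNIV) * ennreal (normal_density (linpred P R z) (sqrt (s2 R)) t)"
        by (rule nn_integral_multc) simp
      also have "\<dots> = ennreal (normal_density (linpred P R z) (sqrt (s2 R)) t)"
        using prod_pmf_one[of "\<lambda>j n. hh R j t n"] nn sm by simp
      finally show "(\<integral>\<^sup>+ y. ?f z y t \<partial>count_space UNIV) = ennreal (normal_density (linpred P R z) (sqrt (s2 R)) t)" .
    qed
    also have "\<dots> = 1"
    proof -
      have sp: "0 < sqrt (s2 R)" using V by (simp add: valid_latreg_def)
      show ?thesis
        by (subst nn_integral_eq_integral) (use integrable_normal_density[OF sp] integral_normal_density[OF sp] in auto)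
    qed
    finally show "(\<integral>\<^sup>+ y. \<integral>\<^sup>+ t. ?f z y t \<partial>lborel \<partial>count_space UNIV) = 1" .
  qed
qed



lemma nnb:
  assumes A: "A \<in> space (prob_algebra N)" and B: "B \<in> N \<rightarrow>\<^sub>M prob_algebra L" and f: "f \<in> borel_measurable L"
  shows "(\<integral>\<^sup>+ x. f x \<partial>(A \<bind> B)) = (\<integral>\<^sup>+ x. \<integral>\<^sup>+ y. f y \<partial>B x \<partial>A)"
proof -
  have sA: "sets A = sets N" using A by (simp add: space_prob_algebra)
  have "B \<in> A \<rightarrow>\<^sub>M subprob_algebra L"
    using measurable_prob_algebraD[OF B] measurable_cong_sets[OF sA refl] by blast
  then show ?thesis by (rule nn_integral_bind[OF f])
qed

lemma nn_ret:
  assumes "f \<in> borel_measurable M" "x \<in> space M"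
  shows "(\<integral>\<^sup>+ y. f y \<partial>return M x) = f x"
  using nn_integral_return[OF assms(2,1)] .

lemma nn_const_prob: "prob_space M \<Longrightarrow> (\<integral>\<^sup>+ y. c \<partial>M) = c"
  by (simp add: prob_space.emeasure_space_1)

lemma space_prob_algebraI: "prob_space M \<Longrightarrow> sets M = sets N \<Longrightarrow> M \<in> space (prob_algebra N)"
  by (simp add: space_prob_algebra)

lemma kernel_space: assumes "K \<in> M \<rightarrow>\<^sub>M prob_algebra N" "x \<in> space M" shows "K x \<in> space (prob_algebra N)"
  using measurable_space[OF assms] .

lemma kernel_prob: "K \<in> M \<rightarrow>\<^sub>M prob_algebra N \<Longrightarrow> x \<in> space M \<Longrightarrow> prob_space (K x)"
  using measurable_space[of K M "prob_algebra N" x] by (simp add: space_prob_algebra)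

lemma kernel_sets: "K \<in> M \<rightarrow>\<^sub>M prob_algebra N \<Longrightarrow> x \<in> space M \<Longrightarrow> sets (K x) = sets N"
  using measurable_space[of K M "prob_algebra N" x] by (simp add: space_prob_algebra)

lemma mask_UNIV[simp]: "mask UNIV z = z"
  by (simp add: mask_def vec_eq_iff)

declare nn_integral_measurable_subprob_algebra2[measurable (raw)]

locale ko =
  fixes P :: "'p::finite copula" and R :: "('p, 'q::finite) latreg"
    and q :: "real^'p \<Rightarrow> 'p set \<Rightarrow> real"
    and NZ :: "(real^'p) measure" and S :: "real^'p^'p"
    and K1 :: "'p set \<Rightarrow> (real^'p) \<times> ('q \<Rightarrow> nat) \<Rightarrow> (real^'p) measure"
    and K2 :: "real^'p \<Rightarrow> (real^'p) measure"
  assumes A1: "valid_copula P" and A2: "valid_latreg R" and A3: "valid_missing P R q"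
    and A4: "is_gauss (Sig P) NZ"
    and A5: "\<forall>i j. i \<noteq> j \<longrightarrow> S $ i $ j = 0"
    and A6: "\<forall>t. 0 \<le> t \<bullet> (block_G (Sig P) S *v t)"
    and A7: "\<forall>a. cond_kernel P R NZ a (K1 a)"
    and A8: "K2 \<in> ZS \<rightarrow>\<^sub>M prob_algebra ZS"
    and A9: "is_gauss (block_G (Sig P) S) (bind NZ (\<lambda>w. distr (K2 w) borel (join2 w)))"
begin

lemma NZ_prob: "prob_space NZ" and NZ_sets: "sets NZ = sets borel"
  using A4 by (auto simp: is_gauss_def)

lemma NZ_space: "NZ \<in> space (prob_algebra borel)"
  using NZ_prob NZ_sets by (simp add: space_prob_algebra)

lemma Yk[measurable]: "Ylaw P R \<in> borel \<rightarrow>\<^sub>M prob_algebra YS" by (rule Ylaw_kernel[OF A2])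
lemma Ak[measurable]: "Aker q \<in> borel \<rightarrow>\<^sub>M prob_algebra AS" by (rule Aker_kernel[OF A3])
lemma K1m[measurable]: "K1 a \<in> ZS \<Otimes>\<^sub>M YS \<rightarrow>\<^sub>M prob_algebra ZS" using A7 by (simp add: cond_kernel_def)
lemma K2m[measurable]: "K2 \<in> ZS \<rightarrow>\<^sub>M prob_algebra ZS" by (rule A8)
lemma Yk'[measurable]: "Ylaw P R \<in> borel \<rightarrow>\<^sub>M subprob_algebra YS" by (rule measurable_prob_algebraD[OF Yk])
lemma Ak'[measurable]: "Aker q \<in> borel \<rightarrow>\<^sub>M subprob_algebra AS" by (rule measurable_prob_algebraD[OF Ak])
lemma K1m'[measurable]: "K1 a \<in> ZS \<Otimes>\<^sub>M YS \<rightarrow>\<^sub>M subprob_algebra ZS" by (rule measurable_prob_algebraD[OF K1m])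
lemma K2m'[measurable]: "K2 \<in> ZS \<rightarrow>\<^sub>M subprob_algebra ZS" by (rule measurable_prob_algebraD[OF K2m])

lemma MZY_kernel[measurable]: "(\<lambda>zs. Ylaw P R (Fmap P zs) \<bind> (\<lambda>y. return (ZS \<Otimes>\<^sub>M YS) (zs, y))) \<in> borel \<rightarrow>\<^sub>M prob_algebra (ZS \<Otimes>\<^sub>M YS)"
  by measurable

lemma MZY_space: "modelZY P R NZ \<in> space (prob_algebra (ZS \<Otimes>\<^sub>M YS))"
  using measurable_space[OF measurable_bind_prob_space[OF measurable_const[OF NZ_space] MZY_kernel], of undefined "count_space UNIV"]
  unfolding modelZY_def by simp

lemma MZY_prob: "prob_space (modelZY P R NZ)" and MZY_sets: "sets (modelZY P R NZ) = sets (ZS \<Otimes>\<^sub>M YS)"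
  using MZY_space by (auto simp: space_prob_algebra)

lemma MZY_int:
  assumes f[measurable]: "f \<in> borel_measurable (ZS \<Otimes>\<^sub>M YS)"
  shows "(\<integral>\<^sup>+ x. f x \<partial>modelZY P R NZ) = (\<integral>\<^sup>+ zs. \<integral>\<^sup>+ y. f (zs, y) \<partial>Ylaw P R (Fmap P zs) \<partial>NZ)"
proof -
  have B: "(\<lambda>zs. Ylaw P R (Fmap P zs) \<bind> (\<lambda>y. return (ZS \<Otimes>\<^sub>M YS) (zs, y))) \<in> borel \<rightarrow>\<^sub>M prob_algebra (ZS \<Otimes>\<^sub>M YS)"
    by measurable
  have "(\<integral>\<^sup>+ x. f x \<partial>modelZY P R NZ) = (\<integral>\<^sup>+ zs. \<integral>\<^sup>+ x. f x \<partial>(Ylaw P R (Fmap P zs) \<bind> (\<lambda>y. return (ZS \<Otimes>\<^sub>M YS) (zs, y))) \<partial>NZ)"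
    unfolding modelZY_def by (rule nnb[OF NZ_space B f])
  also have "\<dots> = (\<integral>\<^sup>+ zs. \<integral>\<^sup>+ y. f (zs, y) \<partial>Ylaw P R (Fmap P zs) \<partial>NZ)"
  proof (rule nn_integral_cong)
    fix zs :: "real^'p"
    have "(\<integral>\<^sup>+ x. f x \<partial>(Ylaw P R (Fmap P zs) \<bind> (\<lambda>y. return (ZS \<Otimes>\<^sub>M YS) (zs, y))))
        = (\<integral>\<^sup>+ y. \<integral>\<^sup>+ x. f x \<partial>return (ZS \<Otimes>\<^sub>M YS) (zs, y) \<partial>Ylaw P R (Fmap P zs))"
    proof (rule nnb[OF kernel_space[OF Yk] _ f])
      show "(\<lambda>y. return (ZS \<Otimes>\<^sub>M YS) (zs, y)) \<in> YS \<rightarrow>\<^sub>M prob_algebra (ZS \<Otimes>\<^sub>M YS)" by measurable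
    qed simp
    also have "\<dots> = (\<integral>\<^sup>+ y. f (zs, y) \<partial>Ylaw P R (Fmap P zs))"
      by (intro nn_integral_cong nn_ret f) (simp add: space_pair_measure)
    finally show "(\<integral>\<^sup>+ x. f x \<partial>(Ylaw P R (Fmap P zs) \<bind> (\<lambda>y. return (ZS \<Otimes>\<^sub>M YS) (zs, y)))) = (\<integral>\<^sup>+ y. f (zs, y) \<partial>Ylaw P R (Fmap P zs))" .
  qed
  finally show ?thesis .
qed

lemma CK_int:
  assumes h[measurable]: "h \<in> borel_measurable (ZS \<Otimes>\<^sub>M YS \<Otimes>\<^sub>M ZS)"
  shows "(\<integral>\<^sup>+ zs. \<integral>\<^sup>+ y. h (mask a (Fmap P zs), y, zs) \<partial>Ylaw P R (Fmap P zs) \<partial>NZ)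
       = (\<integral>\<^sup>+ zs. \<integral>\<^sup>+ y. \<integral>\<^sup>+ w. h (mask a (Fmap P zs), y, w) \<partial>K1 a (mask a (Fmap P zs), y) \<partial>Ylaw P R (Fmap P zs) \<partial>NZ)"
proof -
  let ?M = "modelZY P R NZ"
  let ?T3 = "ZS \<Otimes>\<^sub>M YS \<Otimes>\<^sub>M ZS :: ((real^'p) \<times> ('q \<Rightarrow> nat) \<times> (real^'p)) measure"
  let ?T2 = "ZS \<Otimes>\<^sub>M YS :: ((real^'p) \<times> ('q \<Rightarrow> nat)) measure"
  have E: "distr ?M ?T3 (\<lambda>(zs, y). (mask a (Fmap P zs), y, zs)) =
     bind (distr ?M ?T2 (\<lambda>(zs, y). (mask a (Fmap P zs), y)))
          (\<lambda>(zo, y). bind (K1 a (zo, y)) (\<lambda>w. return ?T3 (zo, y, w)))"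
    using A7 by (simp add: cond_kernel_def)
  have mc: "measurable ?M N = measurable ?T2 N" for N :: "'z measure"
    by (rule measurable_cong_sets[OF MZY_sets refl])
  have phi: "(\<lambda>(zs, y). (mask a (Fmap P zs), y, zs)) \<in> ?M \<rightarrow>\<^sub>M ?T3" unfolding mc by measurable
  have psi: "(\<lambda>(zs, y). (mask a (Fmap P zs), y)) \<in> ?M \<rightarrow>\<^sub>M ?T2" unfolding mc by measurable
  have "(\<integral>\<^sup>+ x. h x \<partial>distr ?M ?T3 (\<lambda>(zs, y). (mask a (Fmap P zs), y, zs)))
      = (\<integral>\<^sup>+ x. h ((\<lambda>(zs, y). (mask a (Fmap P zs), y, zs)) x) \<partial>?M)"
    by (rule nn_integral_distr[OF phi]) simp
  also have "\<dots> = (\<integral>\<^sup>+ zs. \<integral>\<^sup>+ y. h (mask a (Fmap P zs), y, zs) \<partial>Ylaw P R (Fmap P zs) \<partial>NZ)"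
    by (subst MZY_int) simp_all
  finally have L: "(\<integral>\<^sup>+ x. h x \<partial>distr ?M ?T3 (\<lambda>(zs, y). (mask a (Fmap P zs), y, zs)))
      = (\<integral>\<^sup>+ zs. \<integral>\<^sup>+ y. h (mask a (Fmap P zs), y, zs) \<partial>Ylaw P R (Fmap P zs) \<partial>NZ)" .
  have D: "distr ?M ?T2 (\<lambda>(zs, y). (mask a (Fmap P zs), y)) \<in> space (prob_algebra ?T2)"
    by (intro space_prob_algebraI prob_space.prob_space_distr[OF MZY_prob psi]) simp
  have Bk: "(\<lambda>(zo, y). bind (K1 a (zo, y)) (\<lambda>w. return ?T3 (zo, y, w))) \<in> ?T2 \<rightarrow>\<^sub>M prob_algebra ?T3"
    by measurable
  have "(\<integral>\<^sup>+ x. h x \<partial>bind (distr ?M ?T2 (\<lambda>(zs, y). (mask a (Fmap P zs), y)))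
          (\<lambda>(zo, y). bind (K1 a (zo, y)) (\<lambda>w. return ?T3 (zo, y, w))))
     = (\<integral>\<^sup>+ x. \<integral>\<^sup>+ v. h v \<partial>(case x of (zo, y) \<Rightarrow> bind (K1 a (zo, y)) (\<lambda>w. return ?T3 (zo, y, w)))
          \<partial>distr ?M ?T2 (\<lambda>(zs, y). (mask a (Fmap P zs), y)))"
    by (rule nnb[OF D Bk h])
  also have "\<dots> = (\<integral>\<^sup>+ x. \<integral>\<^sup>+ w. h (fst x, snd x, w) \<partial>K1 a x \<partial>distr ?M ?T2 (\<lambda>(zs, y). (mask a (Fmap P zs), y)))"
  proof (rule nn_integral_cong)
    fix x :: "(real^'p) \<times> ('q \<Rightarrow> nat)"
    obtain zo y where x: "x = (zo, y)" by force
    have "(\<integral>\<^sup>+ v. h v \<partial>bind (K1 a (zo, y)) (\<lambda>w. return ?T3 (zo, y, w)))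
        = (\<integral>\<^sup>+ w. \<integral>\<^sup>+ v. h v \<partial>return ?T3 (zo, y, w) \<partial>K1 a (zo, y))"
    proof (rule nnb[OF kernel_space[OF K1m] _ h])
      show "(\<lambda>w. return ?T3 (zo, y, w)) \<in> ZS \<rightarrow>\<^sub>M prob_algebra ?T3" by measurable
    qed (simp add: space_pair_measure)
    also have "\<dots> = (\<integral>\<^sup>+ w. h (zo, y, w) \<partial>K1 a (zo, y))"
      by (intro nn_integral_cong nn_ret h) (simp add: space_pair_measure)
    finally show "(\<integral>\<^sup>+ v. h v \<partial>(case x of (zo, y) \<Rightarrow> bind (K1 a (zo, y)) (\<lambda>w. return ?T3 (zo, y, w))))
        = (\<integral>\<^sup>+ w. h (fst x, snd x, w) \<partial>K1 a x)" by (simp add: x)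
  qed
  also have "\<dots> = (\<integral>\<^sup>+ x. (\<lambda>x. \<integral>\<^sup>+ w. h (fst x, snd x, w) \<partial>K1 a x) ((\<lambda>(zs, y). (mask a (Fmap P zs), y)) x) \<partial>?M)"
    by (rule nn_integral_distr[OF psi]) measurable
  also have "\<dots> = (\<integral>\<^sup>+ zs. \<integral>\<^sup>+ y. \<integral>\<^sup>+ w. h (mask a (Fmap P zs), y, w) \<partial>K1 a (mask a (Fmap P zs), y) \<partial>Ylaw P R (Fmap P zs) \<partial>NZ)"
    by (subst MZY_int) (simp_all, measurable)
  finally show ?thesis using L E by simp
qed

lemma DIS:
  assumes g[measurable]: "(\<lambda>(z, w). g z w) \<in> borel_measurable (ZS \<Otimes>\<^sub>M ZS)"
  shows "(\<integral>\<^sup>+ zs. g (Fmap P zs) zs \<partial>NZ)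
       = (\<integral>\<^sup>+ zs. \<integral>\<^sup>+ y. \<integral>\<^sup>+ w. g (Fmap P zs) w \<partial>K1 UNIV (Fmap P zs, y) \<partial>Ylaw P R (Fmap P zs) \<partial>NZ)"
proof -
  have h: "(\<lambda>(zo, y, w). g zo w) \<in> borel_measurable (ZS \<Otimes>\<^sub>M YS \<Otimes>\<^sub>M ZS)" by measurable
  have "(\<integral>\<^sup>+ zs. g (Fmap P zs) zs \<partial>NZ) = (\<integral>\<^sup>+ zs. \<integral>\<^sup>+ y. g (Fmap P zs) zs \<partial>Ylaw P R (Fmap P zs) \<partial>NZ)"
  proof (rule nn_integral_cong)
    fix zs :: "real^'p"
    show "g (Fmap P zs) zs = (\<integral>\<^sup>+ y. g (Fmap P zs) zs \<partial>Ylaw P R (Fmap P zs))"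
      by (rule nn_const_prob[OF kernel_prob[OF Yk], symmetric]) simp
  qed
  also have "\<dots> = (\<integral>\<^sup>+ zs. \<integral>\<^sup>+ y. (\<lambda>(zo, y, w). g zo w) (mask UNIV (Fmap P zs), y, zs) \<partial>Ylaw P R (Fmap P zs) \<partial>NZ)"
    by simp
  also have "\<dots> = (\<integral>\<^sup>+ zs. \<integral>\<^sup>+ y. \<integral>\<^sup>+ w. (\<lambda>(zo, y, w). g zo w) (mask UNIV (Fmap P zs), y, w) \<partial>K1 UNIV (mask UNIV (Fmap P zs), y) \<partial>Ylaw P R (Fmap P zs) \<partial>NZ)"
    by (rule CK_int[OF h])
  finally show ?thesis by simp
qed

definition kt :: "real^'p \<Rightarrow> (real^'p) measure" where
  "kt z = bind (Ylaw P R z) (\<lambda>y. bind (K1 UNIV (z, y)) (\<lambda>w. distr (K2 w) ZS (Fmap P)))"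

lemma kt_kernel[measurable]: "kt \<in> borel \<rightarrow>\<^sub>M prob_algebra borel"
  unfolding kt_def by measurable

lemma kt_kernel'[measurable]: "kt \<in> borel \<rightarrow>\<^sub>M subprob_algebra borel"
  by (rule measurable_prob_algebraD[OF kt_kernel])

lemma kt_int:
  assumes f[measurable]: "f \<in> borel_measurable ZS"
  shows "(\<integral>\<^sup>+ zt. f zt \<partial>kt z) = (\<integral>\<^sup>+ y. \<integral>\<^sup>+ w. \<integral>\<^sup>+ wt. f (Fmap P wt) \<partial>K2 w \<partial>K1 UNIV (z, y) \<partial>Ylaw P R z)"
proof -
  have "(\<integral>\<^sup>+ zt. f zt \<partial>kt z) = (\<integral>\<^sup>+ y. \<integral>\<^sup>+ zt. f zt \<partial>bind (K1 UNIV (z, y)) (\<lambda>w. distr (K2 w) ZS (Fmap P)) \<partial>Ylaw P R z)"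
  proof -
    have B: "(\<lambda>y. bind (K1 UNIV (z, y)) (\<lambda>w. distr (K2 w) ZS (Fmap P))) \<in> YS \<rightarrow>\<^sub>M prob_algebra ZS" by measurable
    show ?thesis unfolding kt_def by (rule nnb[OF kernel_space[OF Yk] B f]) simp
  qed
  also have "\<dots> = (\<integral>\<^sup>+ y. \<integral>\<^sup>+ w. \<integral>\<^sup>+ wt. f (Fmap P wt) \<partial>K2 w \<partial>K1 UNIV (z, y) \<partial>Ylaw P R z)"
  proof (rule nn_integral_cong)
    fix y
    have "(\<integral>\<^sup>+ zt. f zt \<partial>bind (K1 UNIV (z, y)) (\<lambda>w. distr (K2 w) ZS (Fmap P)))
        = (\<integral>\<^sup>+ w. \<integral>\<^sup>+ zt. f zt \<partial>distr (K2 w) ZS (Fmap P) \<partial>K1 UNIV (z, y))"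
      by (rule nnb[OF kernel_space[OF K1m], where L=borel]) (simp_all add: space_pair_measure, measurable)
    also have "\<dots> = (\<integral>\<^sup>+ w. \<integral>\<^sup>+ wt. f (Fmap P wt) \<partial>K2 w \<partial>K1 UNIV (z, y))"
    proof (rule nn_integral_cong)
      fix w :: "real^'p"
      have "Fmap P \<in> K2 w \<rightarrow>\<^sub>M ZS"
        using measurable_cong_sets[OF kernel_sets[OF K2m, of w] refl] by simp
      then show "(\<integral>\<^sup>+ zt. f zt \<partial>distr (K2 w) ZS (Fmap P)) = (\<integral>\<^sup>+ wt. f (Fmap P wt) \<partial>K2 w)"
        by (rule nn_integral_distr) simp
    qed
    finally show "(\<integral>\<^sup>+ zt. f zt \<partial>bind (K1 UNIV (z, y)) (\<lambda>w. distr (K2 w) ZS (Fmap P)))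
        = (\<integral>\<^sup>+ w. \<integral>\<^sup>+ wt. f (Fmap P wt) \<partial>K2 w \<partial>K1 UNIV (z, y))" .
  qed
  finally show ?thesis .
qed

end


context ko begin

abbreviation "OUT4 \<equiv> (ZS \<Otimes>\<^sub>M ZS \<Otimes>\<^sub>M YS \<Otimes>\<^sub>M AS :: ((real^'p) \<times> (real^'p) \<times> ('q \<Rightarrow> nat) \<times> 'p set) measure)"

definition muK where
  "muK = bind (distr NZ ZS (Fmap P)) (\<lambda>z. bind (kt z) (\<lambda>zt. bind (Ylaw P R z) (\<lambda>y.
                 bind (Aker q z) (\<lambda>a. return OUT4 (z, zt, y, a)))))"

lemma inner3:
  assumes f[measurable]: "f \<in> borel_measurable OUT4"
  shows "(\<integral>\<^sup>+ x. f x \<partial>bind (kt z) (\<lambda>zt. bind (Ylaw P R z) (\<lambda>y. bind (Aker q z) (\<lambda>a. return OUT4 (z, zt, y, a)))))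
    = (\<integral>\<^sup>+ zt. \<integral>\<^sup>+ y. \<integral>\<^sup>+ a. f (z, zt, y, a) \<partial>Aker q z \<partial>Ylaw P R z \<partial>kt z)"
proof -
  have B1: "(\<lambda>zt. bind (Ylaw P R z) (\<lambda>y. bind (Aker q z) (\<lambda>a. return OUT4 (z, zt, y, a)))) \<in> ZS \<rightarrow>\<^sub>M prob_algebra OUT4"
    by measurable
  have B2: "(\<lambda>y. bind (Aker q z) (\<lambda>a. return OUT4 (z, zt, y, a))) \<in> YS \<rightarrow>\<^sub>M prob_algebra OUT4" for zt
    by measurable
  have B3: "(\<lambda>a. return OUT4 (z, zt, y, a)) \<in> AS \<rightarrow>\<^sub>M prob_algebra OUT4" for zt y
    by measurable
  show ?thesis
    apply (subst nnb[OF kernel_space[OF kt_kernel] B1 f], simp)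
    apply (intro nn_integral_cong)
    apply (subst nnb[OF kernel_space[OF Yk] B2 f], simp)
    apply (intro nn_integral_cong)
    apply (subst nnb[OF kernel_space[OF Ak] B3 f], simp)
    apply (intro nn_integral_cong)
    apply (rule nn_ret[OF f])
    apply (simp add: space_pair_measure)
    done
qed

lemma B1:
  assumes f[measurable]: "f \<in> borel_measurable OUT4"
  shows "(\<integral>\<^sup>+ x. f x \<partial>muK) = (\<integral>\<^sup>+ zs. \<integral>\<^sup>+ wt. \<integral>\<^sup>+ y. \<integral>\<^sup>+ a. f (Fmap P zs, Fmap P wt, y, a)
             \<partial>Aker q (Fmap P zs) \<partial>Ylaw P R (Fmap P zs) \<partial>K2 zs \<partial>NZ)"
proof -
  define G where "G z zt = (\<integral>\<^sup>+ y. \<integral>\<^sup>+ a. f (z, zt, y, a) \<partial>Aker q z \<partial>Ylaw P R z)" for z zt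
  have Gm[measurable]: "(\<lambda>(z, zt). G z zt) \<in> borel_measurable (ZS \<Otimes>\<^sub>M ZS)"
    unfolding G_def by measurable
  have D: "distr NZ ZS (Fmap P) \<in> space (prob_algebra ZS)"
    by (intro space_prob_algebraI prob_space.prob_space_distr[OF NZ_prob]) (simp_all add: measurable_cong_sets[OF NZ_sets refl])
  have Bk: "(\<lambda>z. bind (kt z) (\<lambda>zt. bind (Ylaw P R z) (\<lambda>y. bind (Aker q z) (\<lambda>a. return OUT4 (z, zt, y, a))))) \<in> ZS \<rightarrow>\<^sub>M prob_algebra OUT4"
    by measurable
  have "(\<integral>\<^sup>+ x. f x \<partial>muK) = (\<integral>\<^sup>+ z. \<integral>\<^sup>+ zt. G z zt \<partial>kt z \<partial>distr NZ ZS (Fmap P))"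
    unfolding muK_def by (subst nnb[OF D Bk f]) (simp add: inner3 G_def[abs_def])
  also have "\<dots> = (\<integral>\<^sup>+ zs. \<integral>\<^sup>+ zt. G (Fmap P zs) zt \<partial>kt (Fmap P zs) \<partial>NZ)"
    by (rule nn_integral_distr) (simp_all add: measurable_cong_sets[OF NZ_sets refl], measurable)
  also have "\<dots> = (\<integral>\<^sup>+ zs. \<integral>\<^sup>+ y. \<integral>\<^sup>+ w. \<integral>\<^sup>+ wt. G (Fmap P zs) (Fmap P wt) \<partial>K2 w \<partial>K1 UNIV (Fmap P zs, y) \<partial>Ylaw P R (Fmap P zs) \<partial>NZ)"
    by (intro nn_integral_cong kt_int) measurable
  also have "\<dots> = (\<integral>\<^sup>+ zs. \<integral>\<^sup>+ wt. G (Fmap P zs) (Fmap P wt) \<partial>K2 zs \<partial>NZ)"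
    by (rule DIS[where g="\<lambda>z w. \<integral>\<^sup>+ wt. G z (Fmap P wt) \<partial>K2 w", symmetric]) measurable
  finally show ?thesis by (simp add: G_def)
qed

end


definition sw :: "'p set \<Rightarrow> 'p + 'p \<Rightarrow> 'p + 'p" where
  "sw T a = (case a of Inl i \<Rightarrow> if i \<in> T then Inr i else Inl i | Inr i \<Rightarrow> if i \<in> T then Inl i else Inr i)"

lemma sw_sw[simp]: "sw T (sw T a) = a"
  by (cases a) (auto simp: sw_def)

lemma bij_sw: "bij (sw T)"
  by (rule o_bij[of "sw T"]) (auto simp: fun_eq_iff)

definition sigv :: "'p::finite set \<Rightarrow> real^('p + 'p) \<Rightarrow> real^('p + 'p)" where
  "sigv T v = (\<chi> a. v $ sw T a)"

lemma sum_sw: "(\<Sum>a\<in>UNIV. f (sw T a)) = (\<Sum>a\<in>UNIV. f a)"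
  by (rule sum.reindex_bij_betw[of "sw T" UNIV UNIV f]) (use bij_sw in \<open>simp add: bij_betw_def bij_def\<close>)

lemma inner_sigv: "t \<bullet> sigv T x = sigv T t \<bullet> x"
proof -
  have "t \<bullet> sigv T x = (\<Sum>a\<in>UNIV. t $ a * x $ sw T a)" by (simp add: inner_vec_def sigv_def)
  also have "\<dots> = (\<Sum>a\<in>UNIV. t $ sw T (sw T a) * x $ sw T a)" by simp
  also have "\<dots> = (\<Sum>a\<in>UNIV. t $ sw T a * x $ a)" by (rule sum_sw[where f="\<lambda>a. t $ sw T a * x $ a"])
  also have "\<dots> = sigv T t \<bullet> x" by (simp add: inner_vec_def sigv_def)
  finally show ?thesis .
qed

lemma G_sw:
  assumes S: "\<forall>i j. i \<noteq> j \<longrightarrow> S $ i $ j = 0"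
  shows "block_G Sg S $ sw T a $ sw T b = block_G Sg S $ a $ b"
  using S by (cases a; cases b; auto simp: block_G_def sw_def; metis)

lemma quad_sigv:
  assumes S: "\<forall>i j. i \<noteq> j \<longrightarrow> S $ i $ j = 0"
  shows "sigv T t \<bullet> (block_G Sg S *v sigv T t) = t \<bullet> (block_G Sg S *v t)"
proof -
  let ?G = "block_G Sg S"
  have "sigv T t \<bullet> (?G *v sigv T t) = (\<Sum>a\<in>UNIV. t $ sw T a * (\<Sum>b\<in>UNIV. ?G $ a $ b * t $ sw T b))"
    by (simp add: inner_vec_def sigv_def matrix_vector_mult_def)
  also have "\<dots> = (\<Sum>a\<in>UNIV. t $ sw T a * (\<Sum>b\<in>UNIV. ?G $ a $ sw T b * t $ b))"
  proof -
    have inner: "(\<Sum>b\<in>UNIV. ?G $ a $ b * t $ sw T b) = (\<Sum>b\<in>UNIV. ?G $ a $ sw T b * t $ b)" for a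
    proof -
      have "(\<Sum>b\<in>UNIV. ?G $ a $ b * t $ sw T b) = (\<Sum>b\<in>UNIV. ?G $ a $ sw T (sw T b) * t $ sw T b)" by simp
      also have "\<dots> = (\<Sum>b\<in>UNIV. ?G $ a $ sw T b * t $ b)" by (rule sum_sw[where f="\<lambda>b. ?G $ a $ sw T b * t $ b"])
      finally show ?thesis .
    qed
    show ?thesis by (simp only: inner)
  qed
  also have "\<dots> = (\<Sum>a\<in>UNIV. t $ a * (\<Sum>b\<in>UNIV. ?G $ sw T a $ sw T b * t $ b))"
    using sum_sw[where f="\<lambda>a. t $ a * (\<Sum>b\<in>UNIV. ?G $ sw T a $ sw T b * t $ b)" and T=T] by simp
  also have "\<dots> = (\<Sum>a\<in>UNIV. t $ a * (\<Sum>b\<in>UNIV. ?G $ a $ b * t $ b))"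
    by (simp add: G_sw[OF S])
  also have "\<dots> = t \<bullet> (?G *v t)" by (simp add: inner_vec_def matrix_vector_mult_def)
  finally show ?thesis .
qed

lemma sigv_meas[measurable]: "sigv T \<in> borel \<rightarrow>\<^sub>M borel"
  unfolding sigv_def by (rule vec_meas) simp

lemma gauss_swap:
  assumes S: "\<forall>i j. i \<noteq> j \<longrightarrow> S $ i $ j = 0"
    and X: "is_gauss (block_G Sg S) X"
  shows "distr X borel (sigv T) = X"
proof -
  have pX: "prob_space X" and sX: "sets X = sets borel" using X by (auto simp: is_gauss_def)
  have mc: "measurable X N = measurable borel N" for N :: "'z measure" by (rule measurable_cong_sets[OF sX refl])
  have sm: "sigv T \<in> X \<rightarrow>\<^sub>M borel" unfolding mc by simp
  show ?thesis
  proof (rule cramer_wold)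
    show "prob_space (distr X borel (sigv T))" by (rule prob_space.prob_space_distr[OF pX sm])
    show "prob_space X" by fact
    show "sets (distr X borel (sigv T)) = sets borel" by simp
    show "sets X = sets borel" by fact
    fix t :: "real^('a + 'a)"
    have "distr (distr X borel (sigv T)) borel (\<lambda>x. t \<bullet> x) = distr X borel (\<lambda>x. t \<bullet> sigv T x)"
      by (subst distr_distr) (simp_all add: sm o_def)
    also have "\<dots> = distr X borel (\<lambda>x. sigv T t \<bullet> x)" by (simp add: inner_sigv)
    also have "\<dots> = gauss1 (sigv T t \<bullet> (block_G Sg S *v sigv T t))" using X by (simp add: is_gauss_def)
    also have "\<dots> = gauss1 (t \<bullet> (block_G Sg S *v t))" by (simp add: quad_sigv[OF S])
    also have "\<dots> = distr X borel (\<lambda>x. t \<bullet> x)" using X by (simp add: is_gauss_def)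
    finally show "distr (distr X borel (sigv T)) borel (\<lambda>x. t \<bullet> x) = distr X borel (\<lambda>x. t \<bullet> x)" .
  qed
qed



definition lft :: "real^('p::finite + 'p) \<Rightarrow> real^'p" where "lft v = (\<chi> i. v $ Inl i)"
definition rgt :: "real^('p::finite + 'p) \<Rightarrow> real^'p" where "rgt v = (\<chi> i. v $ Inr i)"

lemma lft_meas[measurable]: "lft \<in> borel \<rightarrow>\<^sub>M borel" unfolding lft_def by (rule vec_meas) simp
lemma rgt_meas[measurable]: "rgt \<in> borel \<rightarrow>\<^sub>M borel" unfolding rgt_def by (rule vec_meas) simp
lemma lft_join[simp]: "lft (join2 x y) = x" by (simp add: lft_def join2_def vec_eq_iff)
lemma rgt_join[simp]: "rgt (join2 x y) = y" by (simp add: rgt_def join2_def vec_eq_iff)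

lemma fst_nth_meas[measurable]: "(\<lambda>p. fst p $ i) \<in> borel_measurable ((borel :: (real^'n::finite) measure) \<Otimes>\<^sub>M (borel :: (real^'n::finite) measure))"
proof -
  have "(\<lambda>x::real^'n. x $ i) \<in> borel_measurable borel" by simp
  from measurable_compose[OF measurable_fst this] show ?thesis .
qed
lemma snd_nth_meas[measurable]: "(\<lambda>p. snd p $ i) \<in> borel_measurable ((borel :: (real^'n::finite) measure) \<Otimes>\<^sub>M (borel :: (real^'n::finite) measure))"
proof -
  have "(\<lambda>x::real^'n. x $ i) \<in> borel_measurable borel" by simp
  from measurable_compose[OF measurable_snd this] show ?thesis .
qed

lemma join2_meas[measurable]: "(\<lambda>(x, y). join2 x y) \<in> borel \<Otimes>\<^sub>M borel \<rightarrow>\<^sub>M (borel :: (real^('p::finite + 'p)) measure)"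
proof -
  have "(\<lambda>(x, y). join2 x y) = (\<lambda>p::(real^'p) \<times> (real^'p). \<chi> a. case a of Inl i \<Rightarrow> fst p $ i | Inr i \<Rightarrow> snd p $ i)"
    by (auto simp: join2_def fun_eq_iff)
  moreover have "(\<lambda>p::(real^'p) \<times> (real^'p). \<chi> a. case a of Inl i \<Rightarrow> fst p $ i | Inr i \<Rightarrow> snd p $ i) \<in> borel \<Otimes>\<^sub>M borel \<rightarrow>\<^sub>M borel"
  proof (rule vec_meas)
    fix a :: "'p + 'p"
    show "(\<lambda>p::(real^'p) \<times> (real^'p). case a of Inl i \<Rightarrow> fst p $ i | Inr i \<Rightarrow> snd p $ i) \<in> borel_measurable (borel \<Otimes>\<^sub>M borel)"
      by (cases a) simp_all
  qed
  ultimately show ?thesis by simp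
qed

lemma swapS_meas[measurable]: "swapS T \<in> (borel \<Otimes>\<^sub>M borel) \<rightarrow>\<^sub>M (borel \<Otimes>\<^sub>M borel :: ((real^'p::finite) \<times> (real^'p)) measure)"
  unfolding swapS_def by (intro measurable_Pair vec_meas) (simp_all split: if_split)

lemma swapS_Fmap: "swapS T (Fmap P (lft v), Fmap P (rgt v)) = (Fmap P (lft (sigv T v)), Fmap P (rgt (sigv T v)))"
  by (simp add: swapS_def Fmap_def lft_def rgt_def sigv_def sw_def vec_eq_iff)

context ko begin

abbreviation "Xm \<equiv> bind NZ (\<lambda>w. distr (K2 w) borel (join2 w))"

lemma Xm_kernel[measurable]: "(\<lambda>w. distr (K2 w) borel (join2 w)) \<in> borel \<rightarrow>\<^sub>M prob_algebra borel"
  by measurable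

lemma Xm_prob: "prob_space Xm" and Xm_sets: "sets Xm = sets borel"
  using A9 by (auto simp: is_gauss_def)

lemma Ak1[simp]: "emeasure (Aker q z) (space (Aker q z)) = 1"
  by (rule prob_space.emeasure_space_1[OF kernel_prob[OF Ak]]) simp
lemma Yk1[simp]: "emeasure (Ylaw P R z) (space (Ylaw P R z)) = 1"
  by (rule prob_space.emeasure_space_1[OF kernel_prob[OF Yk]]) simp

lemma muK_space: "muK \<in> space (prob_algebra OUT4)"
proof -
  have D: "distr NZ ZS (Fmap P) \<in> space (prob_algebra ZS)"
    by (intro space_prob_algebraI prob_space.prob_space_distr[OF NZ_prob]) (simp_all add: measurable_cong_sets[OF NZ_sets refl])
  have Bk: "(\<lambda>z. bind (kt z) (\<lambda>zt. bind (Ylaw P R z) (\<lambda>y. bind (Aker q z) (\<lambda>a. return OUT4 (z, zt, y, a))))) \<in> ZS \<rightarrow>\<^sub>M prob_algebra OUT4"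
    by measurable
  show ?thesis
    using measurable_space[OF measurable_bind_prob_space[OF measurable_const[OF D] Bk], of undefined "count_space UNIV"]
    unfolding muK_def by simp
qed

lemma muK_prob: "prob_space muK" and muK_sets: "sets muK = sets OUT4"
  using muK_space by (auto simp: space_prob_algebra)

lemma mu2_eq:
  "distr muK (ZS \<Otimes>\<^sub>M ZS) (\<lambda>(z, zt, y, a). (z, zt)) = distr Xm (ZS \<Otimes>\<^sub>M ZS) (\<lambda>v. (Fmap P (lft v), Fmap P (rgt v)))"
proof (rule measure_eqI)
  show "sets (distr muK (ZS \<Otimes>\<^sub>M ZS) (\<lambda>(z, zt, y, a). (z, zt))) = sets (distr Xm (ZS \<Otimes>\<^sub>M ZS) (\<lambda>v. (Fmap P (lft v), Fmap P (rgt v))))"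
    by simp
  fix X assume X: "X \<in> sets (distr muK (ZS \<Otimes>\<^sub>M ZS) (\<lambda>(z, zt, y, a). (z, zt)))"
  then have X'[measurable]: "X \<in> sets (ZS \<Otimes>\<^sub>M ZS)" by simp
  have pm: "(\<lambda>(z, zt, y, a). (z, zt)) \<in> muK \<rightarrow>\<^sub>M (ZS \<Otimes>\<^sub>M ZS)"
    unfolding measurable_cong_sets[OF muK_sets refl] by measurable
  have Phm: "(\<lambda>v. (Fmap P (lft v), Fmap P (rgt v))) \<in> Xm \<rightarrow>\<^sub>M (ZS \<Otimes>\<^sub>M ZS)"
    unfolding measurable_cong_sets[OF Xm_sets refl] by measurable
  have "emeasure (distr muK (ZS \<Otimes>\<^sub>M ZS) (\<lambda>(z, zt, y, a). (z, zt))) X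
      = (\<integral>\<^sup>+ x. indicator X x \<partial>distr muK (ZS \<Otimes>\<^sub>M ZS) (\<lambda>(z, zt, y, a). (z, zt)))"
    using X by (simp add: nn_integral_indicator)
  also have "\<dots> = (\<integral>\<^sup>+ x. indicator X ((\<lambda>(z, zt, y, a). (z, zt)) x) \<partial>muK)"
    by (rule nn_integral_distr[OF pm]) simp
  also have "\<dots> = (\<integral>\<^sup>+ zs. \<integral>\<^sup>+ wt. \<integral>\<^sup>+ y. \<integral>\<^sup>+ a. indicator X (Fmap P zs, Fmap P wt)
             \<partial>Aker q (Fmap P zs) \<partial>Ylaw P R (Fmap P zs) \<partial>K2 zs \<partial>NZ)"
    by (subst B1) (simp_all, measurable)
  also have "\<dots> = (\<integral>\<^sup>+ zs. \<integral>\<^sup>+ wt. indicator X (Fmap P zs, Fmap P wt) \<partial>K2 zs \<partial>NZ)"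
    by (simp add: nn_const_prob kernel_prob[OF Ak] kernel_prob[OF Yk])
  also have "\<dots> = (\<integral>\<^sup>+ zs. \<integral>\<^sup>+ v. indicator X (Fmap P (lft v), Fmap P (rgt v)) \<partial>distr (K2 zs) borel (join2 zs) \<partial>NZ)"
  proof (rule nn_integral_cong)
    fix zs :: "real^'p"
    have jm: "join2 zs \<in> K2 zs \<rightarrow>\<^sub>M borel"
      unfolding measurable_cong_sets[OF kernel_sets[OF K2m, of zs] refl] by simp measurable
    show "(\<integral>\<^sup>+ wt. indicator X (Fmap P zs, Fmap P wt) \<partial>K2 zs) = (\<integral>\<^sup>+ v. indicator X (Fmap P (lft v), Fmap P (rgt v)) \<partial>distr (K2 zs) borel (join2 zs))"
      by (subst nn_integral_distr[OF jm]) (simp_all, measurable)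
  qed
  also have "\<dots> = (\<integral>\<^sup>+ v. indicator X (Fmap P (lft v), Fmap P (rgt v)) \<partial>Xm)"
    by (rule nnb[OF NZ_space Xm_kernel, symmetric]) measurable
  also have "\<dots> = (\<integral>\<^sup>+ x. indicator X x \<partial>distr Xm (ZS \<Otimes>\<^sub>M ZS) (\<lambda>v. (Fmap P (lft v), Fmap P (rgt v))))"
    by (rule nn_integral_distr[OF Phm, symmetric]) simp
  also have "\<dots> = emeasure (distr Xm (ZS \<Otimes>\<^sub>M ZS) (\<lambda>v. (Fmap P (lft v), Fmap P (rgt v)))) X"
    using X' by (simp add: nn_integral_indicator)
  finally show "emeasure (distr muK (ZS \<Otimes>\<^sub>M ZS) (\<lambda>(z, zt, y, a). (z, zt))) X = emeasure (distr Xm (ZS \<Otimes>\<^sub>M ZS) (\<lambda>v. (Fmap P (lft v), Fmap P (rgt v)))) X" .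
qed

lemma swap_inv:
  "distr (distr muK (ZS \<Otimes>\<^sub>M ZS) (\<lambda>(z, zt, y, a). (z, zt))) (ZS \<Otimes>\<^sub>M ZS) (swapS T)
    = distr muK (ZS \<Otimes>\<^sub>M ZS) (\<lambda>(z, zt, y, a). (z, zt))"
proof -
  let ?Ph = "\<lambda>v. (Fmap P (lft v), Fmap P (rgt v))"
  have Phm: "?Ph \<in> Xm \<rightarrow>\<^sub>M (ZS \<Otimes>\<^sub>M ZS)"
    unfolding measurable_cong_sets[OF Xm_sets refl] by measurable
  have sgm: "sigv T \<in> Xm \<rightarrow>\<^sub>M borel"
    unfolding measurable_cong_sets[OF Xm_sets refl] by measurable
  have "distr (distr Xm (ZS \<Otimes>\<^sub>M ZS) ?Ph) (ZS \<Otimes>\<^sub>M ZS) (swapS T) = distr Xm (ZS \<Otimes>\<^sub>M ZS) (swapS T \<circ> ?Ph)"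
    by (rule distr_distr[OF swapS_meas Phm])
  also have "swapS T \<circ> ?Ph = ?Ph \<circ> sigv T" by (simp add: fun_eq_iff swapS_Fmap)
  also have "distr Xm (ZS \<Otimes>\<^sub>M ZS) (?Ph \<circ> sigv T) = distr (distr Xm borel (sigv T)) (ZS \<Otimes>\<^sub>M ZS) ?Ph"
    by (rule distr_distr[symmetric]) (simp_all add: sgm, measurable)
  also have "distr Xm borel (sigv T) = Xm" by (rule gauss_swap[OF A5 A9])
  finally show ?thesis by (simp add: mu2_eq)
qed

end


lemma K1_joint:
  fixes K1 :: "'p::finite set \<Rightarrow> 'x \<Rightarrow> 'y measure"
  assumes "\<And>a. K1 a \<in> M \<rightarrow>\<^sub>M N"
  shows "(\<lambda>(a, x). K1 a x) \<in> count_space UNIV \<Otimes>\<^sub>M M \<rightarrow>\<^sub>M N"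
  by (rule measurable_pair_measure_countable1) (simp_all add: assms)

context ko begin

lemma K1_comp[measurable (raw)]:
  assumes "f \<in> L \<rightarrow>\<^sub>M AS" "g \<in> L \<rightarrow>\<^sub>M ZS \<Otimes>\<^sub>M YS"
  shows "(\<lambda>x. K1 (f x) (g x)) \<in> L \<rightarrow>\<^sub>M prob_algebra ZS"
proof -
  have "(\<lambda>(a, x). K1 a x) \<in> AS \<Otimes>\<^sub>M (ZS \<Otimes>\<^sub>M YS) \<rightarrow>\<^sub>M prob_algebra ZS"
    by (rule K1_joint) (rule K1m)
  from measurable_compose[OF measurable_Pair[OF assms] this] show ?thesis by simp
qed

lemma K1_comp'[measurable (raw)]:
  assumes "f \<in> L \<rightarrow>\<^sub>M AS" "g \<in> L \<rightarrow>\<^sub>M ZS \<Otimes>\<^sub>M YS"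
  shows "(\<lambda>x. K1 (f x) (g x)) \<in> L \<rightarrow>\<^sub>M subprob_algebra ZS"
  by (rule measurable_prob_algebraD[OF K1_comp[OF assms]])

lemma mask_comp[measurable (raw)]:
  assumes "f \<in> L \<rightarrow>\<^sub>M (AS :: 'p set measure)" "g \<in> L \<rightarrow>\<^sub>M borel"
  shows "(\<lambda>x. mask (f x) (g x)) \<in> L \<rightarrow>\<^sub>M borel"
proof -
  have "(\<lambda>(a, z). mask a z) \<in> (AS :: 'p set measure) \<Otimes>\<^sub>M borel \<rightarrow>\<^sub>M borel"
    by (rule measurable_pair_measure_countable1) simp_all
  from measurable_compose[OF measurable_Pair[OF assms] this] show ?thesis by simp
qed

lemma q_meas[measurable]: "(\<lambda>z. q z a) \<in> borel_measurable borel"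
  using A3 by (simp add: valid_missing_def)

lemma q_comp[measurable (raw)]:
  assumes "f \<in> L \<rightarrow>\<^sub>M (AS :: 'p set measure)" "g \<in> L \<rightarrow>\<^sub>M borel"
  shows "(\<lambda>x. q (g x) (f x)) \<in> borel_measurable L"
proof -
  have "(\<lambda>(a, z). q z a) \<in> (AS :: 'p set measure) \<Otimes>\<^sub>M borel \<rightarrow>\<^sub>M borel"
    by (rule measurable_pair_measure_countable1) simp_all
  from measurable_compose[OF measurable_Pair[OF assms] this] show ?thesis by simp
qed

lemma smar: "q z a = q (mask a z) a"
proof -
  have all: "\<forall>a z z'. (\<forall>k\<in>a \<inter> nonnull P R. z $ k = z' $ k) \<longrightarrow> q z a = q z' a"
    using A3 unfolding valid_missing_def by blast
  have "\<forall>k\<in>a \<inter> nonnull P R. z $ k = mask a z $ k" by (simp add: mask_def)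
  then show ?thesis using all by blast
qed

lemma AK_sum:
  assumes "F \<in> borel_measurable AS"
  shows "(\<integral>\<^sup>+ a. F a \<partial>Aker q z) = (\<Sum>a\<in>UNIV. ennreal (q z a) * F a)"
  unfolding Aker_def
  by (subst nn_integral_density) (simp_all add: nn_integral_count_space_finite)

end


context ko begin

abbreviation "OBS \<equiv> (ZS \<Otimes>\<^sub>M AS \<Otimes>\<^sub>M YS \<Otimes>\<^sub>M ZS :: ((real^'p) \<times> 'p set \<times> ('q \<Rightarrow> nat) \<times> (real^'p)) measure)"
abbreviation "T3 \<equiv> (ZS \<Otimes>\<^sub>M AS \<Otimes>\<^sub>M YS :: ((real^'p) \<times> 'p set \<times> ('q \<Rightarrow> nat)) measure)"

lemma truth_kernel[measurable]: "(\<lambda>zs. bind (Aker q (Fmap P zs)) (\<lambda>a. bind (Ylaw P R (Fmap P zs)) (\<lambda>y. return T3 (zs, a, y)))) \<in> ZS \<rightarrow>\<^sub>M prob_algebra T3"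
  by measurable

lemma truth_space: "truth P R q NZ \<in> space (prob_algebra T3)"
  using measurable_space[OF measurable_bind_prob_space[OF measurable_const[OF NZ_space] truth_kernel], of undefined "count_space UNIV"]
  unfolding truth_def by simp

lemma truth_int:
  assumes f[measurable]: "f \<in> borel_measurable T3"
  shows "(\<integral>\<^sup>+ x. f x \<partial>truth P R q NZ) = (\<integral>\<^sup>+ zs. \<integral>\<^sup>+ a. \<integral>\<^sup>+ y. f (zs, a, y) \<partial>Ylaw P R (Fmap P zs) \<partial>Aker q (Fmap P zs) \<partial>NZ)"
proof -
  have B2: "(\<lambda>a. bind (Ylaw P R (Fmap P zs)) (\<lambda>y. return T3 (zs, a, y))) \<in> AS \<rightarrow>\<^sub>M prob_algebra T3" for zs
    by measurable
  have B3: "(\<lambda>y. return T3 (zs, a, y)) \<in> YS \<rightarrow>\<^sub>M prob_algebra T3" for zs a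
    by measurable
  show ?thesis
    unfolding truth_def
    apply (subst nnb[OF NZ_space truth_kernel f])
    apply (intro nn_integral_cong)
    apply (subst nnb[OF kernel_space[OF Ak] B2 f], simp)
    apply (intro nn_integral_cong)
    apply (subst nnb[OF kernel_space[OF Yk] B3 f], simp)
    apply (intro nn_integral_cong)
    apply (rule nn_ret[OF f])
    apply (simp add: space_pair_measure)
    done
qed

lemma out_kernel[measurable]:
  "(\<lambda>(zs, a, y). bind (K1 a (mask a (Fmap P zs), y)) (\<lambda>w. bind (K2 w) (\<lambda>wt.
        return OBS (mask a (Fmap P zs), a, y, mask a (Fmap P wt))))) \<in> T3 \<rightarrow>\<^sub>M prob_algebra OBS"
  by measurable

lemma out_space: "out_law P R q NZ K1 K2 \<in> space (prob_algebra OBS)"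
  using measurable_space[OF measurable_bind_prob_space[OF measurable_const[OF truth_space] out_kernel], of undefined "count_space UNIV"]
  unfolding out_law_def by simp

lemma out_int:
  assumes h[measurable]: "h \<in> borel_measurable OBS"
  shows "(\<integral>\<^sup>+ x. h x \<partial>out_law P R q NZ K1 K2) = (\<integral>\<^sup>+ zs. \<integral>\<^sup>+ a. \<integral>\<^sup>+ y. \<integral>\<^sup>+ w. \<integral>\<^sup>+ wt.
      h (mask a (Fmap P zs), a, y, mask a (Fmap P wt)) \<partial>K2 w \<partial>K1 a (mask a (Fmap P zs), y)
      \<partial>Ylaw P R (Fmap P zs) \<partial>Aker q (Fmap P zs) \<partial>NZ)"
proof -
  have B2: "(\<lambda>w. bind (K2 w) (\<lambda>wt. return OBS (mask a (Fmap P zs), a, y, mask a (Fmap P wt)))) \<in> ZS \<rightarrow>\<^sub>M prob_algebra OBS" for zs a y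
    by measurable
  have B3: "(\<lambda>wt. return OBS (mask a (Fmap P zs), a, y, mask a (Fmap P wt))) \<in> ZS \<rightarrow>\<^sub>M prob_algebra OBS" for zs a y
    by measurable
  have I: "(\<lambda>(zs, a, y). \<integral>\<^sup>+ w. \<integral>\<^sup>+ wt. h (mask a (Fmap P zs), a, y, mask a (Fmap P wt)) \<partial>K2 w \<partial>K1 a (mask a (Fmap P zs), y)) \<in> borel_measurable T3"
    by measurable
  have "(\<integral>\<^sup>+ x. h x \<partial>out_law P R q NZ K1 K2) = (\<integral>\<^sup>+ x. (\<lambda>(zs, a, y). \<integral>\<^sup>+ w. \<integral>\<^sup>+ wt. h (mask a (Fmap P zs), a, y, mask a (Fmap P wt)) \<partial>K2 w \<partial>K1 a (mask a (Fmap P zs), y)) x \<partial>truth P R q NZ)"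
    unfolding out_law_def
    apply (subst nnb[OF truth_space out_kernel h])
    apply (intro nn_integral_cong)
    apply (clarsimp simp: space_pair_measure)
    apply (subst nnb[OF kernel_space[OF K1m] B2 h], simp add: space_pair_measure)
    apply (intro nn_integral_cong)
    apply (subst nnb[OF kernel_space[OF K2m] B3 h], simp)
    apply (intro nn_integral_cong)
    apply (rule nn_ret[OF h])
    apply (simp add: space_pair_measure)
    done
  also have "\<dots> = (\<integral>\<^sup>+ zs. \<integral>\<^sup>+ a. \<integral>\<^sup>+ y. \<integral>\<^sup>+ w. \<integral>\<^sup>+ wt.
      h (mask a (Fmap P zs), a, y, mask a (Fmap P wt)) \<partial>K2 w \<partial>K1 a (mask a (Fmap P zs), y)
      \<partial>Ylaw P R (Fmap P zs) \<partial>Aker q (Fmap P zs) \<partial>NZ)"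
    by (subst truth_int[OF I]) simp
  finally show ?thesis .
qed

end


context ko begin

lemma claim1:
  "distr muK OBS (\<lambda>(z, zt, y, a). (mask a z, a, y, mask a zt)) = out_law P R q NZ K1 K2"
proof (rule measure_eqI)
  show "sets (distr muK OBS (\<lambda>(z, zt, y, a). (mask a z, a, y, mask a zt))) = sets (out_law P R q NZ K1 K2)"
    using out_space by (simp add: space_prob_algebra)
  fix X assume X: "X \<in> sets (distr muK OBS (\<lambda>(z, zt, y, a). (mask a z, a, y, mask a zt)))"
  then have X'[measurable]: "X \<in> sets OBS" by simp
  define Th where "Th a zo y w = ennreal (q zo a) * (\<integral>\<^sup>+ wt. indicator X (zo, a, y, mask a (Fmap P wt)) \<partial>K2 w)"
    for a zo y w
  have Thm[measurable]: "(\<lambda>(zo, y, w). Th a zo y w) \<in> borel_measurable (ZS \<Otimes>\<^sub>M YS \<Otimes>\<^sub>M ZS)" for a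
    unfolding Th_def by measurable
  have Thc[measurable (raw)]: "(\<lambda>x. Th a (f x) (g x) (h x)) \<in> borel_measurable M"
    if "f \<in> M \<rightarrow>\<^sub>M ZS" "g \<in> M \<rightarrow>\<^sub>M YS" "h \<in> M \<rightarrow>\<^sub>M ZS" for a f g h and M :: "'z measure"
  proof -
    have "(\<lambda>x. (f x, g x, h x)) \<in> M \<rightarrow>\<^sub>M ZS \<Otimes>\<^sub>M YS \<Otimes>\<^sub>M ZS" using that by measurable
    from measurable_compose[OF this Thm[of a]] show ?thesis by simp
  qed
  have om: "(\<lambda>(z, zt, y, a). (mask a z, a, y, mask a zt)) \<in> muK \<rightarrow>\<^sub>M OBS"
    unfolding measurable_cong_sets[OF muK_sets refl] by measurable
  have "emeasure (distr muK OBS (\<lambda>(z, zt, y, a). (mask a z, a, y, mask a zt))) X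
      = (\<integral>\<^sup>+ x. indicator X x \<partial>distr muK OBS (\<lambda>(z, zt, y, a). (mask a z, a, y, mask a zt)))"
    using X by (simp add: nn_integral_indicator)
  also have "\<dots> = (\<integral>\<^sup>+ x. indicator X ((\<lambda>(z, zt, y, a). (mask a z, a, y, mask a zt)) x) \<partial>muK)"
    by (rule nn_integral_distr[OF om]) simp
  also have "\<dots> = (\<integral>\<^sup>+ zs. \<integral>\<^sup>+ wt. \<integral>\<^sup>+ y. \<integral>\<^sup>+ a. indicator X (mask a (Fmap P zs), a, y, mask a (Fmap P wt))
             \<partial>Aker q (Fmap P zs) \<partial>Ylaw P R (Fmap P zs) \<partial>K2 zs \<partial>NZ)"
    by (subst B1) (simp_all, measurable)
  also have "\<dots> = (\<integral>\<^sup>+ zs. \<integral>\<^sup>+ y. (\<Sum>a\<in>UNIV. Th a (mask a (Fmap P zs)) y zs) \<partial>Ylaw P R (Fmap P zs) \<partial>NZ)"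
  proof (rule nn_integral_cong)
    fix zs :: "real^'p"
    have p1: "prob_space (K2 zs)" by (rule kernel_prob[OF K2m]) simp
    have p2: "prob_space (Ylaw P R (Fmap P zs))" by (rule kernel_prob[OF Yk]) simp
    interpret pp: pair_prob_space "K2 zs" "Ylaw P R (Fmap P zs)"
      by (simp add: pair_prob_space_def pair_sigma_finite_def p1 p2 prob_space_imp_sigma_finite)
    have "(\<integral>\<^sup>+ wt. \<integral>\<^sup>+ y. \<integral>\<^sup>+ a. indicator X (mask a (Fmap P zs), a, y, mask a (Fmap P wt)) \<partial>Aker q (Fmap P zs) \<partial>Ylaw P R (Fmap P zs) \<partial>K2 zs)
        = (\<integral>\<^sup>+ wt. \<integral>\<^sup>+ y. (\<Sum>a\<in>UNIV. ennreal (q (Fmap P zs) a) * indicator X (mask a (Fmap P zs), a, y, mask a (Fmap P wt))) \<partial>Ylaw P R (Fmap P zs) \<partial>K2 zs)"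
      by (intro nn_integral_cong AK_sum) (simp add: measurable_count_space_eq1)
    also have "\<dots> = (\<integral>\<^sup>+ y. \<integral>\<^sup>+ wt. (\<Sum>a\<in>UNIV. ennreal (q (Fmap P zs) a) * indicator X (mask a (Fmap P zs), a, y, mask a (Fmap P wt))) \<partial>K2 zs \<partial>Ylaw P R (Fmap P zs))"
    proof (rule pp.Fubini'[symmetric])
      have "(\<lambda>(wt, y). \<Sum>a\<in>UNIV. ennreal (q (Fmap P zs) a) * indicator X (mask a (Fmap P zs), a, y, mask a (Fmap P wt))) \<in> borel_measurable (ZS \<Otimes>\<^sub>M YS)"
        by measurable
      moreover have "sets (K2 zs \<Otimes>\<^sub>M Ylaw P R (Fmap P zs)) = sets (ZS \<Otimes>\<^sub>M YS)"
        by (intro sets_pair_measure_cong kernel_sets[OF K2m] kernel_sets[OF Yk]) simp_all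
      ultimately show "(\<lambda>(wt, y). \<Sum>a\<in>UNIV. ennreal (q (Fmap P zs) a) * indicator X (mask a (Fmap P zs), a, y, mask a (Fmap P wt))) \<in> borel_measurable (K2 zs \<Otimes>\<^sub>M Ylaw P R (Fmap P zs))"
        using measurable_cong_sets by blast
    qed
    also have "\<dots> = (\<integral>\<^sup>+ y. (\<Sum>a\<in>UNIV. Th a (mask a (Fmap P zs)) y zs) \<partial>Ylaw P R (Fmap P zs))"
    proof (rule nn_integral_cong)
      fix y
      have mK2: "measurable (K2 zs) N = measurable ZS N" for N :: "'z measure"
        by (rule measurable_cong_sets[OF kernel_sets[OF K2m] refl]) simp
      have "(\<integral>\<^sup>+ wt. (\<Sum>a\<in>UNIV. ennreal (q (Fmap P zs) a) * indicator X (mask a (Fmap P zs), a, y, mask a (Fmap P wt))) \<partial>K2 zs)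
          = (\<Sum>a\<in>UNIV. \<integral>\<^sup>+ wt. ennreal (q (Fmap P zs) a) * indicator X (mask a (Fmap P zs), a, y, mask a (Fmap P wt)) \<partial>K2 zs)"
        by (rule nn_integral_sum) (unfold mK2, measurable)
      also have "\<dots> = (\<Sum>a\<in>UNIV. Th a (mask a (Fmap P zs)) y zs)"
      proof (rule sum.cong[OF refl])
        fix a
        have "(\<integral>\<^sup>+ wt. ennreal (q (Fmap P zs) a) * indicator X (mask a (Fmap P zs), a, y, mask a (Fmap P wt)) \<partial>K2 zs)
            = ennreal (q (Fmap P zs) a) * (\<integral>\<^sup>+ wt. indicator X (mask a (Fmap P zs), a, y, mask a (Fmap P wt)) \<partial>K2 zs)"
          by (rule nn_integral_cmult) (unfold mK2, measurable)
        then show "(\<integral>\<^sup>+ wt. ennreal (q (Fmap P zs) a) * indicator X (mask a (Fmap P zs), a, y, mask a (Fmap P wt)) \<partial>K2 zs)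
            = Th a (mask a (Fmap P zs)) y zs"
          unfolding Th_def using smar[of "Fmap P zs" a] by simp
      qed
      finally show "(\<integral>\<^sup>+ wt. (\<Sum>a\<in>UNIV. ennreal (q (Fmap P zs) a) * indicator X (mask a (Fmap P zs), a, y, mask a (Fmap P wt))) \<partial>K2 zs)
          = (\<Sum>a\<in>UNIV. Th a (mask a (Fmap P zs)) y zs)" .
    qed
    finally show "(\<integral>\<^sup>+ wt. \<integral>\<^sup>+ y. \<integral>\<^sup>+ a. indicator X (mask a (Fmap P zs), a, y, mask a (Fmap P wt)) \<partial>Aker q (Fmap P zs) \<partial>Ylaw P R (Fmap P zs) \<partial>K2 zs)
        = (\<integral>\<^sup>+ y. (\<Sum>a\<in>UNIV. Th a (mask a (Fmap P zs)) y zs) \<partial>Ylaw P R (Fmap P zs))" .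
  qed
  also have "\<dots> = (\<integral>\<^sup>+ zs. (\<Sum>a\<in>UNIV. \<integral>\<^sup>+ y. Th a (mask a (Fmap P zs)) y zs \<partial>Ylaw P R (Fmap P zs)) \<partial>NZ)"
  proof (rule nn_integral_cong)
    fix zs :: "real^'p"
    have mY: "measurable (Ylaw P R (Fmap P zs)) N = measurable YS N" for N :: "'z measure"
      by (rule measurable_cong_sets[OF kernel_sets[OF Yk] refl]) simp
    show "(\<integral>\<^sup>+ y. (\<Sum>a\<in>UNIV. Th a (mask a (Fmap P zs)) y zs) \<partial>Ylaw P R (Fmap P zs))
        = (\<Sum>a\<in>UNIV. \<integral>\<^sup>+ y. Th a (mask a (Fmap P zs)) y zs \<partial>Ylaw P R (Fmap P zs))"
      by (rule nn_integral_sum) (simp add: mY measurable_count_space_eq1)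
  qed
  also have "\<dots> = (\<Sum>a\<in>UNIV. \<integral>\<^sup>+ zs. \<integral>\<^sup>+ y. Th a (mask a (Fmap P zs)) y zs \<partial>Ylaw P R (Fmap P zs) \<partial>NZ)"
  proof (rule nn_integral_sum)
    fix a
    have T2: "(\<lambda>(zs, y). Th a (mask a (Fmap P zs)) y zs) \<in> borel_measurable (ZS \<Otimes>\<^sub>M YS)"
    proof -
      have "(\<lambda>(zs, y). (mask a (Fmap P zs), y, zs)) \<in> ZS \<Otimes>\<^sub>M YS \<rightarrow>\<^sub>M ZS \<Otimes>\<^sub>M YS \<Otimes>\<^sub>M ZS" by measurable
      from measurable_compose[OF this Thm[of a]] show ?thesis by (simp add: case_prod_beta)
    qed
    have "(\<lambda>zs. \<integral>\<^sup>+ y. Th a (mask a (Fmap P zs)) y zs \<partial>Ylaw P R (Fmap P zs)) \<in> borel_measurable borel"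
      by (rule nn_integral_measurable_subprob_algebra2[OF T2]) measurable
    then show "(\<lambda>zs. \<integral>\<^sup>+ y. Th a (mask a (Fmap P zs)) y zs \<partial>Ylaw P R (Fmap P zs)) \<in> borel_measurable NZ"
      by (simp add: measurable_cong_sets[OF NZ_sets refl])
  qed
  also have "\<dots> = (\<Sum>a\<in>UNIV. \<integral>\<^sup>+ zs. \<integral>\<^sup>+ y. \<integral>\<^sup>+ w. Th a (mask a (Fmap P zs)) y w \<partial>K1 a (mask a (Fmap P zs), y) \<partial>Ylaw P R (Fmap P zs) \<partial>NZ)"
    using CK_int[OF Thm] by simp
  also have "\<dots> = (\<integral>\<^sup>+ zs. \<integral>\<^sup>+ a. \<integral>\<^sup>+ y. \<integral>\<^sup>+ w. \<integral>\<^sup>+ wt.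
      indicator X (mask a (Fmap P zs), a, y, mask a (Fmap P wt)) \<partial>K2 w \<partial>K1 a (mask a (Fmap P zs), y)
      \<partial>Ylaw P R (Fmap P zs) \<partial>Aker q (Fmap P zs) \<partial>NZ)"
  proof -
    have "(\<Sum>a\<in>UNIV. \<integral>\<^sup>+ zs. \<integral>\<^sup>+ y. \<integral>\<^sup>+ w. Th a (mask a (Fmap P zs)) y w \<partial>K1 a (mask a (Fmap P zs), y) \<partial>Ylaw P R (Fmap P zs) \<partial>NZ)
        = (\<integral>\<^sup>+ zs. (\<Sum>a\<in>UNIV. \<integral>\<^sup>+ y. \<integral>\<^sup>+ w. Th a (mask a (Fmap P zs)) y w \<partial>K1 a (mask a (Fmap P zs), y) \<partial>Ylaw P R (Fmap P zs)) \<partial>NZ)"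
      by (rule nn_integral_sum[symmetric]) (unfold measurable_cong_sets[OF NZ_sets refl], measurable)
    also have "\<dots> = (\<integral>\<^sup>+ zs. \<integral>\<^sup>+ a. \<integral>\<^sup>+ y. \<integral>\<^sup>+ w. \<integral>\<^sup>+ wt.
      indicator X (mask a (Fmap P zs), a, y, mask a (Fmap P wt)) \<partial>K2 w \<partial>K1 a (mask a (Fmap P zs), y)
      \<partial>Ylaw P R (Fmap P zs) \<partial>Aker q (Fmap P zs) \<partial>NZ)"
    proof (rule nn_integral_cong)
      fix zs :: "real^'p"
      have mY: "measurable (Ylaw P R (Fmap P zs)) N = measurable YS N" for N :: "'z measure"
        by (rule measurable_cong_sets[OF kernel_sets[OF Yk] refl]) simp
      have mK1: "measurable (K1 a x) N = measurable ZS N" for a x N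
        by (rule measurable_cong_sets[OF kernel_sets[OF K1m] refl]) (simp add: space_pair_measure)
      have eqa: "(\<integral>\<^sup>+ y. \<integral>\<^sup>+ w. Th a (mask a (Fmap P zs)) y w \<partial>K1 a (mask a (Fmap P zs), y) \<partial>Ylaw P R (Fmap P zs))
          = ennreal (q (Fmap P zs) a) * (\<integral>\<^sup>+ y. \<integral>\<^sup>+ w. \<integral>\<^sup>+ wt.
            indicator X (mask a (Fmap P zs), a, y, mask a (Fmap P wt)) \<partial>K2 w \<partial>K1 a (mask a (Fmap P zs), y) \<partial>Ylaw P R (Fmap P zs))" for a
      proof -
        have "(\<integral>\<^sup>+ y. \<integral>\<^sup>+ w. Th a (mask a (Fmap P zs)) y w \<partial>K1 a (mask a (Fmap P zs), y) \<partial>Ylaw P R (Fmap P zs))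
          = (\<integral>\<^sup>+ y. ennreal (q (Fmap P zs) a) * (\<integral>\<^sup>+ w. \<integral>\<^sup>+ wt.
            indicator X (mask a (Fmap P zs), a, y, mask a (Fmap P wt)) \<partial>K2 w \<partial>K1 a (mask a (Fmap P zs), y)) \<partial>Ylaw P R (Fmap P zs))"
        proof (rule nn_integral_cong)
          fix y
          show "(\<integral>\<^sup>+ w. Th a (mask a (Fmap P zs)) y w \<partial>K1 a (mask a (Fmap P zs), y))
            = ennreal (q (Fmap P zs) a) * (\<integral>\<^sup>+ w. \<integral>\<^sup>+ wt.
            indicator X (mask a (Fmap P zs), a, y, mask a (Fmap P wt)) \<partial>K2 w \<partial>K1 a (mask a (Fmap P zs), y))"
            unfolding Th_def smar[of "Fmap P zs" a, symmetric]
            by (rule nn_integral_cmult) (unfold mK1, measurable)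
        qed
        also have "\<dots> = ennreal (q (Fmap P zs) a) * (\<integral>\<^sup>+ y. \<integral>\<^sup>+ w. \<integral>\<^sup>+ wt.
            indicator X (mask a (Fmap P zs), a, y, mask a (Fmap P wt)) \<partial>K2 w \<partial>K1 a (mask a (Fmap P zs), y) \<partial>Ylaw P R (Fmap P zs))"
          by (rule nn_integral_cmult) (simp add: mY measurable_count_space_eq1)
        finally show ?thesis .
      qed
      show "(\<Sum>a\<in>UNIV. \<integral>\<^sup>+ y. \<integral>\<^sup>+ w. Th a (mask a (Fmap P zs)) y w \<partial>K1 a (mask a (Fmap P zs), y) \<partial>Ylaw P R (Fmap P zs))
        = (\<integral>\<^sup>+ a. \<integral>\<^sup>+ y. \<integral>\<^sup>+ w. \<integral>\<^sup>+ wt.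
      indicator X (mask a (Fmap P zs), a, y, mask a (Fmap P wt)) \<partial>K2 w \<partial>K1 a (mask a (Fmap P zs), y)
      \<partial>Ylaw P R (Fmap P zs) \<partial>Aker q (Fmap P zs))"
        by (subst AK_sum) (simp_all add: eqa measurable_count_space_eq1)
    qed
    finally show ?thesis .
  qed
  also have "\<dots> = (\<integral>\<^sup>+ x. indicator X x \<partial>out_law P R q NZ K1 K2)"
    by (rule out_int[symmetric]) simp
  also have "\<dots> = emeasure (out_law P R q NZ K1 K2) X"
    using out_space X' by (simp add: nn_integral_indicator space_prob_algebra)
  finally show "emeasure (distr muK OBS (\<lambda>(z, zt, y, a). (mask a z, a, y, mask a zt))) X = emeasure (out_law P R q NZ K1 K2) X" .
qed

end


context ko begin
lemma main: "is_knockoff P R (out_law P R q NZ K1 K2)"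
  unfolding is_knockoff_def
proof (intro exI conjI)
  show "is_gauss (Sig P) NZ" by (rule A4)
  show "kt \<in> ZS \<rightarrow>\<^sub>M prob_algebra ZS" by (rule kt_kernel)
  show "Aker q \<in> ZS \<rightarrow>\<^sub>M prob_algebra AS" by (rule Ak)
  show "let \<mu> = bind (distr NZ ZS (Fmap P)) (\<lambda>z. bind (kt z) (\<lambda>zt. bind (Ylaw P R z) (\<lambda>y.
                 bind (Aker q z) (\<lambda>a. return (ZS \<Otimes>\<^sub>M ZS \<Otimes>\<^sub>M YS \<Otimes>\<^sub>M AS) (z, zt, y, a)))));
          \<mu>2 = distr \<mu> (ZS \<Otimes>\<^sub>M ZS) (\<lambda>(z, zt, y, a). (z, zt))
      in distr \<mu> (ZS \<Otimes>\<^sub>M AS \<Otimes>\<^sub>M YS \<Otimes>\<^sub>M ZS) (\<lambda>(z, zt, y, a). (mask a z, a, y, mask a zt)) = out_law P R q NZ K1 K2 \<and>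
         (\<forall>T. distr \<mu>2 (ZS \<Otimes>\<^sub>M ZS) (swapS T) = \<mu>2)"
    unfolding Let_def muK_def[symmetric] using claim1 swap_inv by blast
qed
end

theorem proposition1:
  fixes P :: "'p::finite copula" and R :: "('p, 'q::finite) latreg"
    and q :: "real^'p \<Rightarrow> 'p set \<Rightarrow> real"
    and NZ :: "(real^'p) measure" and S :: "real^'p^'p"
    and K1 :: "'p set \<Rightarrow> (real^'p) \<times> ('q \<Rightarrow> nat) \<Rightarrow> (real^'p) measure"
    and K2 :: "real^'p \<Rightarrow> (real^'p) measure"
  assumes "valid_copula P" and "valid_latreg R" and "valid_missing P R q"
    and "is_gauss (Sig P) NZ"
    and "\<forall>i j. i \<noteq> j \<longrightarrow> S $ i $ j = 0"
    and "\<forall>t. 0 \<le> t \<bullet> (block_G (Sig P) S *v t)"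
    and "\<forall>a. cond_kernel P R NZ a (K1 a)"
    and "K2 \<in> ZS \<rightarrow>\<^sub>M prob_algebra ZS"
    and "is_gauss (block_G (Sig P) S) (bind NZ (\<lambda>w. distr (K2 w) borel (join2 w)))"
  shows "is_knockoff P R (out_law P R q NZ K1 K2)"
proof -
  interpret ko P R q NZ S K1 K2 by unfold_locales (use assms in auto)
  show ?thesis by (rule main)
qed

end
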